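(* If $\delta>0$, $k=k_N=O(N^{1/2-\delta})$, and $p\ge1$ is an integer, then there is $C_p$ (independent of $N$) such that $$\max_{\ell,\ell'=1}^k\mathbb E\Big[\big\langle\boldsymbol\Delta^{(2)}_\ell-\widetilde{\boldsymbol\Delta}_\ell,\boldsymbol\Delta^{(2)}_{\ell'}-\widetilde{\boldsymbol\Delta}_{\ell'}\big\rangle^{2p}\Big]\le C_p\Big(\frac{k}{\sqrt N}\Big)^{4p}\le C_pN^{-4p\delta}.$$
   Context: Let $\mathbf{y}_1,\dots,\mathbf{y}_N$ be i.i.d. $\mathcal N(0,\mathrm{Id}_N)$ vectors in $\mathbb R^N$. Let $\mathbf w_1=\mathbf y_1$, $\mathbf w_i=\mathbf y_i-\sum_{j<i}\frac{\langle\mathbf y_i,\mathbf w_j\rangle}{\|\mathbf w_j\|^2}\mathbf w_j$, $\boldsymbol\gamma_i=\mathbf w_i/\|\mathbf w_i\|$, $\boldsymbol\Delta_1=0$, $\boldsymbol\Delta_i=\sum_{\ell<i}\langle\mathbf y_i,\boldsymbol\gamma_\ell\rangle\boldsymbol\gamma_\ell$, $\widetilde{\boldsymbol\Delta}_i=\frac1N\sum_{\ell<i}\langle\mathbf y_i,\mathbf y_\ell\rangle\mathbf y_\ell$, and $\boldsymbol\Delta^{(2)}_i=\frac1N\sum_{\ell<i}\langle\mathbf y_i,\mathbf y_\ell-\boldsymbol\Delta_\ell\rangle\mathbf y_\ell$ (empty sums are $0$). *)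

theory Defs
  imports "HOL-Probability.Probability" "HOL-Library.Landau_Symbols"
begin

text \<open>Vectors in R^N are functions nat => real, coordinates indexed by {1..N}.
  A sample point omega :: nat * nat => real encodes the Gaussian matrix:
  the i-th vector y_i has j-th coordinate omega (i, j), for i, j in {1..N}.\<close>

definition ip :: "nat \<Rightarrow> (nat \<Rightarrow> real) \<Rightarrow> (nat \<Rightarrow> real) \<Rightarrow> real" where
  "ip N u v = (\<Sum>j\<in>{1..N}. u j * v j)"

definition yv :: "(nat \<times> nat \<Rightarrow> real) \<Rightarrow> nat \<Rightarrow> nat \<Rightarrow> real" where
  "yv \<omega> i = (\<lambda>j. \<omega> (i, j))"

definition gauss_space :: "nat \<Rightarrow> (nat \<times> nat \<Rightarrow> real) measure" where
  "gauss_space N = PiM ({1..N} \<times> {1..N}) (\<lambda>_. std_normal_distribution)"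

fun GS :: "nat \<Rightarrow> (nat \<Rightarrow> nat \<Rightarrow> real) \<Rightarrow> nat \<Rightarrow> (nat \<Rightarrow> real) list" where
  "GS N y 0 = []"
| "GS N y (Suc i) = GS N y i @
     [(\<lambda>j. y (Suc i) j - (\<Sum>u\<leftarrow>GS N y i. ip N (y (Suc i)) u / ip N u u * u j))]"

definition wv :: "nat \<Rightarrow> (nat \<Rightarrow> nat \<Rightarrow> real) \<Rightarrow> nat \<Rightarrow> nat \<Rightarrow> real" where
  "wv N y i = GS N y i ! (i - 1)"

definition gammav :: "nat \<Rightarrow> (nat \<Rightarrow> nat \<Rightarrow> real) \<Rightarrow> nat \<Rightarrow> nat \<Rightarrow> real" where
  "gammav N y i = (\<lambda>j. wv N y i j / sqrt (ip N (wv N y i) (wv N y i)))"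

definition Delta :: "nat \<Rightarrow> (nat \<Rightarrow> nat \<Rightarrow> real) \<Rightarrow> nat \<Rightarrow> nat \<Rightarrow> real" where
  "Delta N y i = (\<lambda>j. \<Sum>l\<in>{1..<i}. ip N (y i) (gammav N y l) * gammav N y l j)"

definition Delta_tilde :: "nat \<Rightarrow> (nat \<Rightarrow> nat \<Rightarrow> real) \<Rightarrow> nat \<Rightarrow> nat \<Rightarrow> real" where
  "Delta_tilde N y i = (\<lambda>j. (1 / real N) * (\<Sum>l\<in>{1..<i}. ip N (y i) (y l) * y l j))"

definition Delta2 :: "nat \<Rightarrow> (nat \<Rightarrow> nat \<Rightarrow> real) \<Rightarrow> nat \<Rightarrow> nat \<Rightarrow> real" where
  "Delta2 N y i = (\<lambda>j. (1 / real N) *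
     (\<Sum>l\<in>{1..<i}. ip N (y i) (\<lambda>m. y l m - Delta N y l m) * y l j))"

definition dd :: "nat \<Rightarrow> (nat \<Rightarrow> nat \<Rightarrow> real) \<Rightarrow> nat \<Rightarrow> nat \<Rightarrow> real" where
  "dd N y i = (\<lambda>j. Delta2 N y i j - Delta_tilde N y i j)"

end

theory Submission
  imports Defs
begin

lemma normal_density_nn_one: "(\<integral>\<^sup>+x. ennreal (normal_density \<mu> 1 x) \<partial>lborel) = 1"
proof -
  interpret prob_space "density lborel (\<lambda>x. ennreal (normal_density \<mu> 1 x))"
    using prob_space_normal_density[of 1 \<mu>] by simp
  have "emeasure (density lborel (\<lambda>x. ennreal (normal_density \<mu> 1 x))) UNIV = 1"
    using emeasure_space_1 by simp
  then show ?thesis by (simp add: emeasure_density)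
qed

lemma std_normal_mgf:
  "(\<integral>\<^sup>+x. ennreal (exp (s * x)) \<partial>std_normal_distribution) = ennreal (exp (s\<^sup>2 / 2))"
proof -
  have eq: "std_normal_density x * exp (s * x) = exp (s\<^sup>2 / 2) * normal_density s 1 x" for x
  proof -
    have "- x\<^sup>2 / 2 + s * x = s\<^sup>2 / 2 + (- (x - s)\<^sup>2 / 2)"
      by (simp add: power2_eq_square field_simps)
    then have "exp (- x\<^sup>2 / 2) * exp (s * x) = exp (s\<^sup>2 / 2) * exp (- (x - s)\<^sup>2 / 2)"
      by (metis exp_add)
    then show ?thesis by (simp add: std_normal_density_def normal_density_def)
  qed
  have "(\<integral>\<^sup>+x. ennreal (exp (s * x)) \<partial>std_normal_distribution)
      = (\<integral>\<^sup>+x. ennreal (std_normal_density x) * ennreal (exp (s * x)) \<partial>lborel)"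
    by (subst nn_integral_density) auto
  also have "\<dots> = (\<integral>\<^sup>+x. ennreal (exp (s\<^sup>2 / 2)) * ennreal (normal_density s 1 x) \<partial>lborel)"
    by (intro nn_integral_cong) (simp add: ennreal_mult[symmetric] eq)
  also have "\<dots> = ennreal (exp (s\<^sup>2 / 2)) * (\<integral>\<^sup>+x. ennreal (normal_density s 1 x) \<partial>lborel)"
    by (subst nn_integral_cmult) auto
  also have "\<dots> = ennreal (exp (s\<^sup>2 / 2))" by (simp add: normal_density_nn_one)
  finally show ?thesis .
qed

lemma pow_le_exp: "(z::real) ^ n / fact n \<le> exp z + exp (- z)"
proof -
  have A: "\<bar>z\<bar> ^ n / fact n \<le> exp \<bar>z\<bar>"
  proof -
    have "\<bar>z\<bar> ^ n / fact n = (\<Sum>i\<in>{n}. \<bar>z\<bar> ^ i /\<^sub>R fact i)" by (simp add: divide_inverse mult.commute)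
    also have "\<dots> \<le> (\<Sum>i. \<bar>z\<bar> ^ i /\<^sub>R fact i)"
      by (rule sum_le_suminf[OF summable_exp_generic]) auto
    also have "\<dots> = exp \<bar>z\<bar>" by (simp add: exp_def)
    finally show ?thesis .
  qed
  have "z ^ n / fact n \<le> \<bar>z\<bar> ^ n / fact n"
    by (intro divide_right_mono) (auto simp: power_abs[symmetric])
  also have "\<dots> \<le> exp \<bar>z\<bar>" by (rule A)
  also have "\<dots> \<le> exp z + exp (- z)" by (cases "z \<ge> 0") auto
  finally show ?thesis .
qed

definition GC :: "nat \<Rightarrow> real" where "GC m = 2 * exp (1/2) * fact (2 * m)"

lemma GC_ge1: "GC m \<ge> 1"
proof -
  have "exp (1/2::real) \<ge> 1" by simp
  moreover have "fact (2*m) \<ge> (1::real)" by simp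
  ultimately have "exp (1/2::real) * fact (2*m) \<ge> 1" using mult_mono[of 1 "exp (1/2::real)" 1 "fact (2*m)"] by simp
  then show ?thesis unfolding GC_def by linarith
qed

lemma GC_pos: "GC m > 0" using GC_ge1[of m] by linarith

interpretation SN: product_prob_space "\<lambda>_. std_normal_distribution" I for I
proof -
  have P: "prob_space std_normal_distribution" using prob_space_normal_density[of 1 0] by simp
  show "product_prob_space (\<lambda>_. std_normal_distribution)"
    unfolding product_prob_space_def product_prob_space_axioms_def product_sigma_finite_def
    using P prob_space_imp_sigma_finite by blast
qed

lemma gauss_mgf_lin:
  fixes J :: "'a set" and v :: "'a \<Rightarrow> real"
  assumes "finite J"
  shows "(\<integral>\<^sup>+y. ennreal (exp (t * (\<Sum>x\<in>J. v x * y x))) \<partial>PiM J (\<lambda>_. std_normal_distribution))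
       = ennreal (exp (t\<^sup>2 * (\<Sum>x\<in>J. (v x)\<^sup>2) / 2))"
proof -
  have "(\<integral>\<^sup>+y. ennreal (exp (t * (\<Sum>x\<in>J. v x * y x))) \<partial>PiM J (\<lambda>_. std_normal_distribution))
     = (\<integral>\<^sup>+y. (\<Prod>x\<in>J. ennreal (exp ((t * v x) * y x))) \<partial>PiM J (\<lambda>_. std_normal_distribution))"
  proof (intro nn_integral_cong)
    fix y :: "'a \<Rightarrow> real"
    have "exp (t * (\<Sum>x\<in>J. v x * y x)) = (\<Prod>x\<in>J. exp ((t * v x) * y x))"
      using assms by (simp add: sum_distrib_left exp_sum mult.assoc)
    then show "ennreal (exp (t * (\<Sum>x\<in>J. v x * y x))) = (\<Prod>x\<in>J. ennreal (exp ((t * v x) * y x)))"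
      by (simp add: prod_ennreal)
  qed
  also have "\<dots> = (\<Prod>x\<in>J. (\<integral>\<^sup>+z. ennreal (exp ((t * v x) * z)) \<partial>std_normal_distribution))"
    by (rule SN.product_nn_integral_prod[OF assms]) auto
  also have "\<dots> = (\<Prod>x\<in>J. ennreal (exp ((t * v x)\<^sup>2 / 2)))"
    by (simp add: std_normal_mgf)
  also have "\<dots> = ennreal (exp (t\<^sup>2 * (\<Sum>x\<in>J. (v x)\<^sup>2) / 2))"
  proof -
    have "(\<Prod>x\<in>J. exp ((t * v x)\<^sup>2 / 2)) = exp (\<Sum>x\<in>J. (t * v x)\<^sup>2 / 2)"
      using assms by (simp add: exp_sum)
    also have "(\<Sum>x\<in>J. (t * v x)\<^sup>2 / 2) = t\<^sup>2 * (\<Sum>x\<in>J. (v x)\<^sup>2) / 2"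
      by (simp add: power_mult_distrib sum_distrib_left sum_divide_distrib)
    finally show ?thesis by (simp add: prod_ennreal)
  qed
  finally show ?thesis .
qed

lemma gauss_lin_moment:
  fixes J :: "'a set" and v :: "'a \<Rightarrow> real"
  assumes "finite J"
  shows "(\<integral>\<^sup>+y. ennreal ((\<Sum>x\<in>J. v x * y x) ^ (2 * m)) \<partial>PiM J (\<lambda>_. std_normal_distribution))
       \<le> ennreal (GC m * (\<Sum>x\<in>J. (v x)\<^sup>2) ^ m)"
proof (cases "(\<Sum>x\<in>J. (v x)\<^sup>2) = 0")
  case True
  then have v0: "\<forall>x\<in>J. v x = 0" using assms by (simp add: sum_nonneg_eq_0_iff)
  show ?thesis
  proof (cases "m = 0")
    case True
    have P: "prob_space (PiM J (\<lambda>_. std_normal_distribution))"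
      by (rule prob_space_PiM) (use prob_space_normal_density[of 1 0] in simp)
    show ?thesis using True GC_ge1[of 0] by (simp add: prob_space.emeasure_space_1[OF P])
  next
    case False
    then show ?thesis using v0 by (simp add: power_0_left)
  qed
next
  case False
  define S where "S = (\<Sum>x\<in>J. (v x)\<^sup>2)"
  have Spos: "S > 0" using False unfolding S_def by (simp add: sum_nonneg order_le_neq_trans)
  define t where "t = 1 / sqrt S"
  have tpos: "t > 0" using Spos unfolding t_def by simp
  have tS: "t\<^sup>2 * S = 1" using Spos unfolding t_def by (simp add: power_divide)
  have pw: "(z::real) ^ (2*m) \<le> fact (2*m) * S ^ m * (exp (t * z) + exp (- t * z))" for z
  proof -
    have "(t * z) ^ (2*m) / fact (2*m) \<le> exp (t * z) + exp (- (t * z))" by (rule pow_le_exp)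
    then have "(t * z) ^ (2*m) \<le> fact (2*m) * (exp (t * z) + exp (- t * z))"
      by (simp add: divide_le_eq mult.commute)
    then have "S ^ m * (t * z) ^ (2*m) \<le> S ^ m * (fact (2*m) * (exp (t * z) + exp (- t * z)))"
      using Spos by (intro mult_left_mono) auto
    moreover have "S ^ m * (t * z) ^ (2*m) = z ^ (2*m)"
    proof -
      have "(t * z) ^ (2*m) = (t\<^sup>2) ^ m * z ^ (2*m)"
        by (simp add: power_mult_distrib power_mult)
      then have "S ^ m * (t * z) ^ (2*m) = (t\<^sup>2 * S) ^ m * z ^ (2*m)"
        by (simp add: power_mult_distrib)
      then show ?thesis using tS by simp
    qed
    ultimately have "z ^ (2*m) \<le> S ^ m * (fact (2*m) * (exp (t * z) + exp (- t * z)))" by linarith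
    then show ?thesis by (simp only: mult.assoc mult.left_commute)
  qed
  let ?M = "PiM J (\<lambda>_. std_normal_distribution)"
  let ?L = "\<lambda>y. \<Sum>x\<in>J. v x * y x"
  have "(\<integral>\<^sup>+y. ennreal (?L y ^ (2 * m)) \<partial>?M)
      \<le> (\<integral>\<^sup>+y. ennreal (fact (2*m) * S ^ m) * (ennreal (exp (t * ?L y)) + ennreal (exp ((- t) * ?L y))) \<partial>?M)"
  proof (intro nn_integral_mono)
    fix y
    have "?L y ^ (2 * m) \<le> fact (2*m) * S ^ m * (exp (t * ?L y) + exp ((- t) * ?L y))" using pw by simp
    moreover have "ennreal (fact (2*m) * S ^ m) * (ennreal A + ennreal B) = ennreal (fact (2*m) * S ^ m * (A + B))"
      if "A \<ge> 0" "B \<ge> 0" for A B :: real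
      using Spos that by (simp add: ennreal_mult ennreal_plus)
    ultimately show "ennreal (?L y ^ (2 * m)) \<le> ennreal (fact (2*m) * S ^ m) * (ennreal (exp (t * ?L y)) + ennreal (exp ((- t) * ?L y)))"
      by (simp add: ennreal_leI)
  qed
  also have "\<dots> = ennreal (fact (2*m) * S ^ m) * ((\<integral>\<^sup>+y. ennreal (exp (t * ?L y)) \<partial>?M) + (\<integral>\<^sup>+y. ennreal (exp ((- t) * ?L y)) \<partial>?M))"
    by (simp add: nn_integral_cmult nn_integral_add)
  also have "\<dots> = ennreal (fact (2*m) * S ^ m) * (ennreal (exp (1/2)) + ennreal (exp (1/2)))"
  proof -
    have m1: "(\<integral>\<^sup>+y. ennreal (exp (t * ?L y)) \<partial>?M) = ennreal (exp (1/2))"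
      using gauss_mgf_lin[OF assms, of t v] tS unfolding S_def by simp
    have m2: "(\<integral>\<^sup>+y. ennreal (exp ((- t) * ?L y)) \<partial>?M) = ennreal (exp (1/2))"
      using gauss_mgf_lin[OF assms, of "- t" v] tS unfolding S_def by simp
    show ?thesis by (simp only: m1 m2)
  qed
  also have "\<dots> = ennreal (GC m * S ^ m)"
  proof -
    have "ennreal (exp (1/2)) + ennreal (exp (1/2)) = ennreal (2 * exp (1/2))"
      by (simp add: ennreal_plus[symmetric] del: ennreal_plus)
    then show ?thesis unfolding GC_def by (simp add: ennreal_mult'[symmetric] mult_ac)
  qed
  finally show ?thesis unfolding S_def .
qed

lemma length_GS[simp]: "length (GS N y i) = i"
  by (induction i) auto

lemma GS_nth: "m < i \<Longrightarrow> GS N y i ! m = wv N y (Suc m)"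
proof (induction i)
  case 0 then show ?case by simp
next
  case (Suc i)
  show ?case
  proof (cases "m < i")
    case True
    then show ?thesis using Suc by (simp add: nth_append)
  next
    case False
    then have "m = i" using Suc.prems by simp
    then show ?thesis by (simp add: wv_def)
  qed
qed

lemma wv_rec:
  assumes "i \<ge> 1"
  shows "wv N y i = (\<lambda>j. y i j - (\<Sum>m\<in>{1..<i}. ip N (y i) (wv N y m) / ip N (wv N y m) (wv N y m) * wv N y m j))"
proof -
  obtain n where n: "i = Suc n" using assms by (cases i) auto
  have "wv N y (Suc n) = (\<lambda>j. y (Suc n) j - (\<Sum>u\<leftarrow>GS N y n. ip N (y (Suc n)) u / ip N u u * u j))"
    by (simp add: wv_def nth_append)
  also have "\<dots> = (\<lambda>j. y (Suc n) j - (\<Sum>m\<in>{1..<Suc n}. ip N (y (Suc n)) (wv N y m) / ip N (wv N y m) (wv N y m) * wv N y m j))"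
  proof
    fix j
    have "(\<Sum>u\<leftarrow>GS N y n. ip N (y (Suc n)) u / ip N u u * u j)
        = (\<Sum>m<n. ip N (y (Suc n)) (GS N y n ! m) / ip N (GS N y n ! m) (GS N y n ! m) * (GS N y n ! m) j)"
      by (simp add: sum_list_sum_nth atLeast0LessThan)
    also have "\<dots> = (\<Sum>m<n. ip N (y (Suc n)) (wv N y (Suc m)) / ip N (wv N y (Suc m)) (wv N y (Suc m)) * wv N y (Suc m) j)"
      by (simp add: GS_nth)
    also have "\<dots> = (\<Sum>m\<in>{1..<Suc n}. ip N (y (Suc n)) (wv N y m) / ip N (wv N y m) (wv N y m) * wv N y m j)"
    proof -
      have e: "{1..<Suc n} = Suc ` {..<n}"
      proof (rule set_eqI, rule iffI)
        fix x assume "x \<in> {1..<Suc n}"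
        then show "x \<in> Suc ` {..<n}" by (intro image_eqI[of _ _ "x - 1"]) auto
      qed auto
      show ?thesis unfolding e by (subst sum.reindex) auto
    qed
    finally show "y (Suc n) j - (\<Sum>u\<leftarrow>GS N y n. ip N (y (Suc n)) u / ip N u u * u j) =
      y (Suc n) j - (\<Sum>m\<in>{1..<Suc n}. ip N (y (Suc n)) (wv N y m) / ip N (wv N y m) (wv N y m) * wv N y m j)"
      by simp
  qed
  finally show ?thesis using n by simp
qed

lemma ip_comm: "ip N u v = ip N v u"
  unfolding ip_def by (simp add: mult.commute)

lemma ip_sum_right: "ip N u (\<lambda>j. \<Sum>m\<in>M. f m j) = (\<Sum>m\<in>M. ip N u (f m))"
  unfolding ip_def by (simp add: sum_distrib_left sum.swap[of _ M])

lemma ip_sum_left: "ip N (\<lambda>j. \<Sum>m\<in>M. f m j) u = (\<Sum>m\<in>M. ip N (f m) u)"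
  unfolding ip_def by (simp add: sum_distrib_right sum.swap[of _ M])

lemma ip_scale_right: "ip N u (\<lambda>j. c * v j) = c * ip N u v"
  unfolding ip_def by (simp add: sum_distrib_left mult_ac)

lemma ip_scale_left: "ip N (\<lambda>j. c * v j) u = c * ip N v u"
  unfolding ip_def by (simp add: sum_distrib_left mult_ac)

lemma ip_div_left: "ip N (\<lambda>j. v j / c) u = ip N v u / c"
  unfolding ip_def by (simp add: sum_divide_distrib)

lemma ip_div_right: "ip N u (\<lambda>j. v j / c) = ip N u v / c"
  unfolding ip_def by (simp add: sum_divide_distrib)

lemma ip_diff_left: "ip N (\<lambda>j. u j - v j) w = ip N u w - ip N v w"
  unfolding ip_def by (simp add: algebra_simps sum_subtractf)

lemma ip_diff_right: "ip N w (\<lambda>j. u j - v j) = ip N w u - ip N w v"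
  unfolding ip_def by (simp add: algebra_simps sum_subtractf)

lemma ip_add_left: "ip N (\<lambda>j. u j + v j) w = ip N u w + ip N v w"
  unfolding ip_def by (simp add: algebra_simps sum.distrib)

lemma ip_self_nonneg: "ip N u u \<ge> 0"
  unfolding ip_def by (simp add: sum_nonneg)

lemma ip_self_zero: "ip N u u = 0 \<Longrightarrow> ip N v u = 0"
proof -
  assume "ip N u u = 0"
  then have "\<forall>j\<in>{1..N}. u j * u j = 0" unfolding ip_def
    by (subst sum_nonneg_eq_0_iff[symmetric]) auto
  then show "ip N v u = 0" unfolding ip_def by simp
qed

lemma ip_cong: "(\<And>j. j \<in> {1..N} \<Longrightarrow> u j = u' j) \<Longrightarrow> (\<And>j. j \<in> {1..N} \<Longrightarrow> v j = v' j) \<Longrightarrow> ip N u v = ip N u' v'"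
  unfolding ip_def by (intro sum.cong) auto

lemma wv_orth: "1 \<le> m \<Longrightarrow> m < i \<Longrightarrow> ip N (wv N y i) (wv N y m) = 0"
proof (induction i arbitrary: m rule: less_induct)
  case (less i)
  let ?w = "wv N y"
  let ?c = "\<lambda>m. ip N (y i) (?w m) / ip N (?w m) (?w m)"
  have orth: "ip N (?w m') (?w m) = 0" if "m' \<in> {1..<i}" "m' \<noteq> m" for m'
  proof (cases "m' < m")
    case True
    then show ?thesis using less.IH[of m m'] less.prems that by (simp add: ip_comm)
  next
    case False
    then have "m < m'" using that by simp
    then show ?thesis using less.IH[of m' m] less.prems that by simp
  qed
  have "ip N (?w i) (?w m) = ip N (y i) (?w m) - (\<Sum>m'\<in>{1..<i}. ?c m' * ip N (?w m') (?w m))"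
    using less.prems by (subst wv_rec[of i]) (simp_all add: ip_diff_left ip_sum_left ip_scale_left ip_div_left)
  also have "(\<Sum>m'\<in>{1..<i}. ?c m' * ip N (?w m') (?w m)) = ?c m * ip N (?w m) (?w m)"
    using less.prems orth by (subst sum.remove[of _ m]) (auto intro!: sum.neutral)
  also have "\<dots> = ip N (y i) (?w m)"
    using ip_self_zero[of N "?w m" "y i"] by (cases "ip N (?w m) (?w m) = 0") auto
  finally show ?case by simp
qed

lemma wv_orth': "1 \<le> m \<Longrightarrow> 1 \<le> m' \<Longrightarrow> m \<noteq> m' \<Longrightarrow> ip N (wv N y m) (wv N y m') = 0"
proof (cases "m < m'")
  case True
  assume "1 \<le> m" "1 \<le> m'" "m \<noteq> m'"
  then show ?thesis using True wv_orth[of m m' N y] by (simp add: ip_comm)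
next
  case False
  assume "1 \<le> m" "1 \<le> m'" "m \<noteq> m'"
  then show ?thesis using False wv_orth[of m' m N y] by simp
qed

lemma gammav_orth: "1 \<le> m \<Longrightarrow> 1 \<le> m' \<Longrightarrow> m \<noteq> m' \<Longrightarrow> ip N (gammav N y m) (gammav N y m') = 0"
  unfolding gammav_def ip_div_left ip_div_right
  using wv_orth'[of m m' N y] by simp

lemma gammav_norm: "ip N (gammav N y m) (gammav N y m) \<le> 1"
proof -
  let ?s = "ip N (wv N y m) (wv N y m)"
  have s0: "?s \<ge> 0" by (rule ip_self_nonneg)
  have "ip N (gammav N y m) (gammav N y m) = ?s / sqrt ?s / sqrt ?s"
    unfolding gammav_def ip_div_left ip_div_right by simp
  also have "\<dots> = ?s / (sqrt ?s * sqrt ?s)" by simp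
  also have "\<dots> = ?s / ?s" using s0 by simp
  also have "\<dots> \<le> 1" by (cases "?s = 0") auto
  finally show ?thesis .
qed

lemma proj_eq: "ip N v (gammav N y m) * gammav N y m j = ip N v (wv N y m) / ip N (wv N y m) (wv N y m) * wv N y m j"
proof -
  let ?s = "ip N (wv N y m) (wv N y m)"
  have s0: "?s \<ge> 0" by (rule ip_self_nonneg)
  have "ip N v (gammav N y m) * gammav N y m j = ip N v (wv N y m) * wv N y m j / (sqrt ?s * sqrt ?s)"
    unfolding gammav_def ip_div_right by simp
  also have "\<dots> = ip N v (wv N y m) / ?s * wv N y m j" using s0 by simp
  finally show ?thesis .
qed

lemma wv_Delta: "1 \<le> l \<Longrightarrow> wv N y l j = y l j - Delta N y l j"
  by (subst wv_rec) (simp_all add: Delta_def proj_eq)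

lemma ip_orth_sum:
  assumes "finite M" "\<And>m m'. m \<in> M \<Longrightarrow> m' \<in> M \<Longrightarrow> m \<noteq> m' \<Longrightarrow> ip N (u m) (u m') = 0"
  shows "ip N (\<lambda>j. \<Sum>m\<in>M. a m * u m j) (\<lambda>j. \<Sum>m\<in>M. a m * u m j) = (\<Sum>m\<in>M. (a m)\<^sup>2 * ip N (u m) (u m))"
proof -
  have "ip N (\<lambda>j. \<Sum>m\<in>M. a m * u m j) (\<lambda>j. \<Sum>m\<in>M. a m * u m j)
      = (\<Sum>m\<in>M. \<Sum>m'\<in>M. a m * a m' * ip N (u m) (u m'))"
    by (simp add: ip_sum_left ip_sum_right ip_scale_left ip_scale_right mult_ac)
  also have "\<dots> = (\<Sum>m\<in>M. a m * a m * ip N (u m) (u m))"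
  proof (intro sum.cong refl)
    fix m assume m: "m \<in> M"
    show "(\<Sum>m'\<in>M. a m * a m' * ip N (u m) (u m')) = a m * a m * ip N (u m) (u m)"
    proof -
      have "(\<Sum>m'\<in>M-{m}. a m * a m' * ip N (u m) (u m')) = 0"
        using assms(2)[OF m] by (intro sum.neutral) auto
      then show ?thesis using assms(1) m by (subst sum.remove[of _ m]) auto
    qed
  qed
  finally show ?thesis by (simp add: power2_eq_square)
qed

lemma Delta_norm: "ip N (Delta N y l) (Delta N y l) \<le> (\<Sum>m\<in>{1..<l}. (ip N (y l) (gammav N y m))\<^sup>2)"
proof -
  have "ip N (Delta N y l) (Delta N y l) = (\<Sum>m\<in>{1..<l}. (ip N (y l) (gammav N y m))\<^sup>2 * ip N (gammav N y m) (gammav N y m))"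
    unfolding Delta_def by (rule ip_orth_sum) (auto intro: gammav_orth)
  also have "\<dots> \<le> (\<Sum>m\<in>{1..<l}. (ip N (y l) (gammav N y m))\<^sup>2)"
    by (intro sum_mono) (simp add: gammav_norm mult_left_le)
  finally show ?thesis .
qed

lemma wv_norm_le: "1 \<le> l \<Longrightarrow> ip N (wv N y l) (wv N y l) \<le> ip N (y l) (y l)"
proof -
  assume l: "1 \<le> l"
  have D: "Delta N y l = (\<lambda>j. \<Sum>m\<in>{1..<l}. ip N (y l) (gammav N y m) / sqrt (ip N (wv N y m) (wv N y m)) * wv N y m j)"
    unfolding Delta_def gammav_def by simp
  have o: "ip N (wv N y l) (Delta N y l) = 0"
    unfolding D ip_sum_right ip_scale_right using l by (auto intro!: sum.neutral simp: wv_orth)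
  have y: "y l = (\<lambda>j. wv N y l j + Delta N y l j)" using wv_Delta[OF l] by auto
  have "ip N (y l) (y l) = ip N (wv N y l) (wv N y l) + 2 * ip N (wv N y l) (Delta N y l) + ip N (Delta N y l) (Delta N y l)"
    by (subst (1 2) y) (simp add: ip_add_left ip_comm[of N _ "\<lambda>j. wv N y l j + Delta N y l j"] ip_comm[of N "Delta N y l" "wv N y l"])
  then show ?thesis using o ip_self_nonneg[of N "Delta N y l"] by simp
qed

lemma dd_eq: "dd N y i = (\<lambda>j. - (1 / real N) * (\<Sum>l\<in>{1..<i}. ip N (y i) (Delta N y l) * y l j))"
  unfolding dd_def Delta2_def Delta_tilde_def
  by (simp add: ip_diff_right algebra_simps sum_subtractf[symmetric] sum_distrib_left)

lemma meas_coord[measurable]: "(\<lambda>\<omega>. \<omega> x) \<in> borel_measurable (gauss_space N)"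
proof (cases "x \<in> {1..N} \<times> {1..N}")
  case True
  then show ?thesis unfolding gauss_space_def by measurable
next
  case False
  have "(\<lambda>\<omega>::nat\<times>nat\<Rightarrow>real. undefined :: real) \<in> borel_measurable (gauss_space N)" by simp
  then show ?thesis
  proof (rule measurable_cong[THEN iffD1, rotated])
    fix w assume "w \<in> space (gauss_space N)"
    then have "w \<in> extensional ({1..N} \<times> {1..N})" by (simp add: gauss_space_def space_PiM PiE_def)
    then show "undefined = w x" using False by (cases x) (auto simp: extensional_def)
  qed
qed

lemma meas_yv[measurable]: "(\<lambda>\<omega>. yv \<omega> i j) \<in> borel_measurable (gauss_space N)"
  unfolding yv_def by simp

lemma meas_wv[measurable]: "(\<lambda>\<omega>. wv N (yv \<omega>) i j) \<in> borel_measurable (gauss_space N)"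
proof (induction i arbitrary: j rule: less_induct)
  case (less i)
  show ?case
  proof (cases "i = 0")
    case True
    then show ?thesis by (simp add: wv_def)
  next
    case False
    then have i1: "i \<ge> 1" by simp
    have IH: "m \<in> {1..<i} \<Longrightarrow> (\<lambda>\<omega>. wv N (yv \<omega>) m j') \<in> borel_measurable (gauss_space N)" for m j'
      using less.IH by simp
    show ?thesis
      unfolding wv_rec[OF i1] ip_def
      by (intro borel_measurable_diff borel_measurable_sum borel_measurable_times borel_measurable_divide IH meas_yv)
qed
qed

lemma meas_gammav[measurable]: "(\<lambda>\<omega>. gammav N (yv \<omega>) i j) \<in> borel_measurable (gauss_space N)"
  unfolding gammav_def ip_def by measurable

lemma meas_Delta[measurable]: "(\<lambda>\<omega>. Delta N (yv \<omega>) i j) \<in> borel_measurable (gauss_space N)"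
  unfolding Delta_def ip_def by measurable

lemma meas_dd[measurable]: "(\<lambda>\<omega>. dd N (yv \<omega>) i j) \<in> borel_measurable (gauss_space N)"
  unfolding dd_eq ip_def by measurable

lemma wv_local:
  "(\<And>m j. m \<in> {1..i} \<Longrightarrow> j \<in> {1..N} \<Longrightarrow> y m j = y' m j) \<Longrightarrow> j \<in> {1..N} \<Longrightarrow> wv N y i j = wv N y' i j"
proof (induction i arbitrary: j rule: less_induct)
  case (less i)
  show ?case
  proof (cases "i = 0")
    case True
    then show ?thesis by (simp add: wv_def)
  next
    case False
    then have i1: "i \<ge> 1" by simp
    have W: "wv N y m j' = wv N y' m j'" if "m \<in> {1..<i}" "j' \<in> {1..N}" for m j'
      using less.IH[of m j'] less.prems(1) that by auto
    have Y: "y i j' = y' i j'" if "j' \<in> {1..N}" for j' using less.prems(1) i1 that by auto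
    have ips: "ip N (y i) (wv N y m) = ip N (y' i) (wv N y' m)" "ip N (wv N y m) (wv N y m) = ip N (wv N y' m) (wv N y' m)"
      if "m \<in> {1..<i}" for m
      using W[OF that] Y by (auto intro!: ip_cong)
    show ?thesis
      unfolding wv_rec[OF i1, of N y] wv_rec[OF i1, of N y']
      using Y[OF less.prems(2)] W[OF _ less.prems(2)] ips by (auto intro!: sum.cong)
  qed
qed

lemma gammav_local:
  "(\<And>m j. m \<in> {1..i} \<Longrightarrow> j \<in> {1..N} \<Longrightarrow> y m j = y' m j) \<Longrightarrow> j \<in> {1..N} \<Longrightarrow> gammav N y i j = gammav N y' i j"
proof -
  assume A: "\<And>m j. m \<in> {1..i} \<Longrightarrow> j \<in> {1..N} \<Longrightarrow> y m j = y' m j" and j: "j \<in> {1..N}"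
  have "ip N (wv N y i) (wv N y i) = ip N (wv N y' i) (wv N y' i)"
    by (intro ip_cong) (use wv_local[OF A] in auto)
  then show ?thesis unfolding gammav_def using wv_local[OF A j] by simp
qed

lemma Delta_local:
  "(\<And>m j. m \<in> {1..i} \<Longrightarrow> j \<in> {1..N} \<Longrightarrow> y m j = y' m j) \<Longrightarrow> j \<in> {1..N} \<Longrightarrow> Delta N y i j = Delta N y' i j"
proof -
  assume A: "\<And>m j. m \<in> {1..i} \<Longrightarrow> j \<in> {1..N} \<Longrightarrow> y m j = y' m j" and j: "j \<in> {1..N}"
  have G: "gammav N y m j' = gammav N y' m j'" if "m \<in> {1..<i}" "j' \<in> {1..N}" for m j'
    using gammav_local[of m N y y' j'] A that by auto
  have "ip N (y i) (gammav N y m) = ip N (y' i) (gammav N y' m)" if "m \<in> {1..<i}" for m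
    using A G that by (intro ip_cong) auto
  then show ?thesis unfolding Delta_def using G j by (auto intro!: sum.cong)
qed

lemma sum_sing_times: "(\<Sum>z\<in>{r} \<times> A. g z) = (\<Sum>j\<in>A. g (r, j))"
proof -
  have "{r} \<times> A = Pair r ` A" by auto
  then show ?thesis by (simp add: sum.reindex inj_on_def)
qed

lemma comp_meas: "z \<in> J \<Longrightarrow> (\<lambda>y. y z) \<in> borel_measurable (PiM J (\<lambda>_. std_normal_distribution))"
proof -
  assume z: "z \<in> J"
  have "(\<lambda>y. y z) \<in> measurable (PiM J (\<lambda>_. std_normal_distribution)) std_normal_distribution"
    by (rule measurable_component_singleton[OF z])
  then show ?thesis by (simp add: measurable_cong_sets[OF refl sets_density])
qed

lemma row_int:
  fixes F :: "(nat \<times> nat \<Rightarrow> real) \<Rightarrow> real" and V :: "(nat \<times> nat \<Rightarrow> real) \<Rightarrow> nat \<Rightarrow> real"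
  assumes r: "r \<in> {1..N}"
    and Fm[measurable]: "F \<in> borel_measurable (gauss_space N)" and F0: "\<And>\<omega>. F \<omega> \<ge> 0"
    and Vm[measurable]: "\<And>j. (\<lambda>\<omega>. V \<omega> j) \<in> borel_measurable (gauss_space N)"
    and Floc: "\<And>\<omega> \<omega>'. (\<And>x. x \<in> {1..N} \<times> {1..N} \<Longrightarrow> fst x \<noteq> r \<Longrightarrow> \<omega> x = \<omega>' x) \<Longrightarrow> F \<omega> = F \<omega>'"
    and Vloc: "\<And>\<omega> \<omega>' j. (\<And>x. x \<in> {1..N} \<times> {1..N} \<Longrightarrow> fst x \<noteq> r \<Longrightarrow> \<omega> x = \<omega>' x) \<Longrightarrow> j \<in> {1..N} \<Longrightarrow> V \<omega> j = V \<omega>' j"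
  shows "(\<integral>\<^sup>+\<omega>. ennreal (F \<omega> * ip N (yv \<omega> r) (V \<omega>) ^ (2 * m)) \<partial>gauss_space N)
       \<le> (\<integral>\<^sup>+\<omega>. ennreal (GC m * F \<omega> * ip N (V \<omega>) (V \<omega>) ^ m) \<partial>gauss_space N)"
proof -
  define J where "J = {r} \<times> {1..N}"
  define K where "K = {1..N} \<times> {1..N} - J"
  let ?M = "\<lambda>_::nat\<times>nat. std_normal_distribution"
  have KJ: "K \<union> J = {1..N} \<times> {1..N}" unfolding K_def J_def using r by auto
  have G: "gauss_space N = PiM (K \<union> J) ?M" unfolding gauss_space_def KJ ..
  have disj: "K \<inter> J = {}" and finK: "finite K" and finJ: "finite J" unfolding K_def J_def by auto
  let ?f = "\<lambda>\<omega>. ennreal (F \<omega> * ip N (yv \<omega> r) (V \<omega>) ^ (2 * m))"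
  let ?g = "\<lambda>\<omega>. ennreal (GC m * F \<omega> * ip N (V \<omega>) (V \<omega>) ^ m)"
  have fm: "?f \<in> borel_measurable (PiM (K \<union> J) ?M)" unfolding G[symmetric] ip_def by measurable
  have gm: "?g \<in> borel_measurable (PiM (K \<union> J) ?M)" unfolding G[symmetric] ip_def by measurable
  have PJ: "prob_space (PiM J ?M)"
    by (rule prob_space_PiM) (use prob_space_normal_density[of 1 0] in simp)
  have inner: "(\<integral>\<^sup>+ y. ?f (merge K J (x, y)) \<partial>(PiM J ?M)) \<le> (\<integral>\<^sup>+ y. ?g (merge K J (x, y)) \<partial>(PiM J ?M))" for x
  proof -
    define x0 where "x0 = merge K J (x, \<lambda>_. 0)"
    have agree: "z \<in> {1..N} \<times> {1..N} \<Longrightarrow> fst z \<noteq> r \<Longrightarrow> merge K J (x, y) z = x0 z" for y z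
      unfolding x0_def merge_def K_def J_def by auto
    have FF: "F (merge K J (x, y)) = F x0" for y by (rule Floc) (rule agree)
    have VV: "j \<in> {1..N} \<Longrightarrow> V (merge K J (x, y)) j = V x0 j" for y j by (rule Vloc) (rule agree)
    have YY: "j \<in> {1..N} \<Longrightarrow> yv (merge K J (x, y)) r j = y (r, j)" for y j
      unfolding yv_def merge_def K_def J_def by auto
    define v where "v = (\<lambda>z::nat\<times>nat. V x0 (snd z))"
    have ipeq: "ip N (yv (merge K J (x, y)) r) (V (merge K J (x, y))) = (\<Sum>z\<in>J. v z * y z)" for y
    proof -
      have "ip N (yv (merge K J (x, y)) r) (V (merge K J (x, y))) = (\<Sum>j\<in>{1..N}. y (r, j) * V x0 j)"
        unfolding ip_def by (intro sum.cong) (auto simp: YY VV)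
      also have "\<dots> = (\<Sum>z\<in>J. v z * y z)"
        unfolding J_def v_def sum_sing_times by (simp add: mult.commute)
      finally show ?thesis .
    qed
    have vv: "(\<Sum>z\<in>J. (v z)\<^sup>2) = ip N (V x0) (V x0)"
      unfolding J_def v_def ip_def sum_sing_times by (simp add: power2_eq_square)
    have "(\<integral>\<^sup>+ y. ?f (merge K J (x, y)) \<partial>(PiM J ?M)) = (\<integral>\<^sup>+ y. ennreal (F x0) * ennreal ((\<Sum>z\<in>J. v z * y z) ^ (2 * m)) \<partial>(PiM J ?M))"
      by (intro nn_integral_cong) (simp add: FF ipeq ennreal_mult F0 zero_le_even_power)
    also have "\<dots> = ennreal (F x0) * (\<integral>\<^sup>+ y. ennreal ((\<Sum>z\<in>J. v z * y z) ^ (2 * m)) \<partial>(PiM J ?M))"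
      by (rule nn_integral_cmult)
         (intro measurable_compose[OF _ measurable_ennreal] borel_measurable_power borel_measurable_sum borel_measurable_times borel_measurable_const comp_meas)
    also have "\<dots> \<le> ennreal (F x0) * ennreal (GC m * (\<Sum>z\<in>J. (v z)\<^sup>2) ^ m)"
      by (intro mult_left_mono gauss_lin_moment finJ) auto
    also have "\<dots> = (\<integral>\<^sup>+ y. ennreal (GC m * F x0 * ip N (V x0) (V x0) ^ m) \<partial>(PiM J ?M))"
      using GC_pos[of m] F0[of x0] ip_self_nonneg[of N "V x0"]
      by (simp add: prob_space.emeasure_space_1[OF PJ] vv ennreal_mult[symmetric] mult_ac)
    also have "\<dots> = (\<integral>\<^sup>+ y. ?g (merge K J (x, y)) \<partial>(PiM J ?M))"
    proof (intro nn_integral_cong)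
      fix y
      have "ip N (V (merge K J (x, y))) (V (merge K J (x, y))) = ip N (V x0) (V x0)"
        by (intro ip_cong) (auto simp: VV)
      then show "ennreal (GC m * F x0 * ip N (V x0) (V x0) ^ m) = ?g (merge K J (x, y))" by (simp add: FF)
    qed
    finally show ?thesis .
  qed
  have "(\<integral>\<^sup>+\<omega>. ?f \<omega> \<partial>gauss_space N) = (\<integral>\<^sup>+ x. (\<integral>\<^sup>+ y. ?f (merge K J (x, y)) \<partial>(PiM J ?M)) \<partial>(PiM K ?M))"
    unfolding G by (rule SN.product_nn_integral_fold[OF disj finK finJ fm])
  also have "\<dots> \<le> (\<integral>\<^sup>+ x. (\<integral>\<^sup>+ y. ?g (merge K J (x, y)) \<partial>(PiM J ?M)) \<partial>(PiM K ?M))"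
    by (intro nn_integral_mono inner)
  also have "\<dots> = (\<integral>\<^sup>+\<omega>. ?g \<omega> \<partial>gauss_space N)"
    unfolding G by (rule SN.product_nn_integral_fold[OF disj finK finJ gm, symmetric])
  finally show ?thesis .
qed

definition cc where "cc N \<omega> l m = ip N (yv \<omega> l) (gammav N (yv \<omega>) m)"
definition ss where "ss N \<omega> l = ip N (yv \<omega> l) (yv \<omega> l)"
definition dl where "dl N \<omega> l = ip N (Delta N (yv \<omega>) l) (Delta N (yv \<omega>) l)"
definition aa where "aa N \<omega> i l = ip N (yv \<omega> i) (Delta N (yv \<omega>) l)"

lemma meas_cc[measurable]: "(\<lambda>\<omega>. cc N \<omega> l m) \<in> borel_measurable (gauss_space N)"
  unfolding cc_def ip_def by measurable
lemma meas_ss[measurable]: "(\<lambda>\<omega>. ss N \<omega> l) \<in> borel_measurable (gauss_space N)"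
  unfolding ss_def ip_def by measurable
lemma meas_dl[measurable]: "(\<lambda>\<omega>. dl N \<omega> l) \<in> borel_measurable (gauss_space N)"
  unfolding dl_def ip_def by measurable
lemma meas_aa[measurable]: "(\<lambda>\<omega>. aa N \<omega> i l) \<in> borel_measurable (gauss_space N)"
  unfolding aa_def ip_def by measurable

lemma ss_nonneg: "ss N \<omega> l \<ge> 0" unfolding ss_def by (rule ip_self_nonneg)
lemma dl_nonneg: "dl N \<omega> l \<ge> 0" unfolding dl_def by (rule ip_self_nonneg)

lemma prob_gauss: "prob_space (gauss_space N)"
  unfolding gauss_space_def
  by (rule prob_space_PiM) (use prob_space_normal_density[of 1 0] in simp)

lemma nn_const: "(\<integral>\<^sup>+\<omega>. ennreal c \<partial>gauss_space N) = ennreal c"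
  by (simp add: prob_space.emeasure_space_1[OF prob_gauss])

lemma power_mean:
  fixes f :: "'a \<Rightarrow> real"
  assumes "finite I" "\<And>i. i \<in> I \<Longrightarrow> f i \<ge> 0" "q \<ge> 1"
  shows "(\<Sum>i\<in>I. f i) ^ q \<le> real (card I) ^ (q - 1) * (\<Sum>i\<in>I. f i ^ q)"
proof (cases "I = {}")
  case True then show ?thesis using assms by (simp add: power_0_left)
next
  case False
  let ?n = "real (card I)"
  have npos: "?n > 0" using False assms(1) by (simp add: card_gt_0_iff)
  have cvx: "convex_on {0..} (\<lambda>x::real. x ^ q)"
  proof (cases "even q")
    case True
    then show ?thesis using convex_power_even convex_on_subset by blast
  next
    case False
    then show ?thesis using convex_power_odd by blast
  qed
  have "(\<Sum>i\<in>I. (1 / ?n) *\<^sub>R f i) ^ q \<le> (\<Sum>i\<in>I. (1 / ?n) * f i ^ q)"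
    using convex_on_sum[OF assms(1) False cvx, of "\<lambda>_. 1 / ?n" f] npos assms(2) by simp
  then have "((\<Sum>i\<in>I. f i) / ?n) ^ q \<le> (\<Sum>i\<in>I. f i ^ q) / ?n"
    by (simp add: sum_distrib_right[symmetric] sum_distrib_left[symmetric] divide_inverse mult.commute)
  then have "(\<Sum>i\<in>I. f i) ^ q / ?n ^ q \<le> (\<Sum>i\<in>I. f i ^ q) / ?n"
    by (simp add: power_divide)
  then have "(\<Sum>i\<in>I. f i) ^ q \<le> (\<Sum>i\<in>I. f i ^ q) / ?n * ?n ^ q"
    using npos by (simp add: divide_le_eq)
  also have "\<dots> = ?n ^ (q - 1) * (\<Sum>i\<in>I. f i ^ q)"
  proof -
    have "?n ^ q = ?n * ?n ^ (q - 1)" using assms(3) by (simp add: power_eq_if)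
    then show ?thesis using npos by simp
  qed
  finally show ?thesis .
qed

lemma nn_sum_bound:
  fixes g :: "'i \<Rightarrow> 'a \<Rightarrow> real"
  assumes "finite L"
    and gm: "\<And>l. l \<in> L \<Longrightarrow> g l \<in> borel_measurable M"
    and g0: "\<And>l \<omega>. l \<in> L \<Longrightarrow> g l \<omega> \<ge> 0"
    and gB: "\<And>l. l \<in> L \<Longrightarrow> (\<integral>\<^sup>+\<omega>. ennreal (g l \<omega>) \<partial>M) \<le> ennreal (B l)"
    and B0: "\<And>l. l \<in> L \<Longrightarrow> B l \<ge> 0"
    and c0: "c \<ge> 0"
    and fle: "\<And>\<omega>. f \<omega> \<le> c * (\<Sum>l\<in>L. g l \<omega>)"
  shows "(\<integral>\<^sup>+\<omega>. ennreal (f \<omega>) \<partial>M) \<le> ennreal (c * (\<Sum>l\<in>L. B l))"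
proof -
  have "(\<integral>\<^sup>+\<omega>. ennreal (f \<omega>) \<partial>M) \<le> (\<integral>\<^sup>+\<omega>. ennreal c * (\<Sum>l\<in>L. ennreal (g l \<omega>)) \<partial>M)"
    by (intro nn_integral_mono) (use fle g0 c0 in \<open>simp add: sum_ennreal ennreal_mult[symmetric] sum_nonneg ennreal_leI\<close>)
  also have "\<dots> = ennreal c * (\<Sum>l\<in>L. (\<integral>\<^sup>+\<omega>. ennreal (g l \<omega>) \<partial>M))"
    using gm by (simp add: nn_integral_cmult nn_integral_sum)
  also have "\<dots> \<le> ennreal c * (\<Sum>l\<in>L. ennreal (B l))"
    by (intro mult_left_mono sum_mono gB) auto
  also have "\<dots> = ennreal (c * (\<Sum>l\<in>L. B l))"
    using B0 c0 by (simp add: sum_ennreal ennreal_mult sum_nonneg)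
  finally show ?thesis .
qed

lemma coord_moment:
  assumes l: "l \<in> {1..N}" and j: "j \<in> {1..N}"
  shows "(\<integral>\<^sup>+\<omega>. ennreal ((\<omega> (l, j)) ^ (2 * m)) \<partial>gauss_space N) \<le> ennreal (GC m)"
proof -
  define V where "V = (\<lambda>(\<omega>::nat\<times>nat\<Rightarrow>real) (j'::nat). if j' = j then 1 else (0::real))"
  have ip1: "ip N (yv \<omega> l) (V \<omega>) = \<omega> (l, j)" for \<omega>
    unfolding ip_def V_def yv_def using j by (simp add: if_distrib cong: if_cong)
  have ip2: "ip N (V \<omega>) (V \<omega>) = 1" for \<omega>
    unfolding ip_def V_def using j by (simp add: if_distrib cong: if_cong)
  have "(\<integral>\<^sup>+\<omega>. ennreal ((\<omega> (l, j)) ^ (2 * m)) \<partial>gauss_space N)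
      = (\<integral>\<^sup>+\<omega>. ennreal ((\<lambda>_. 1) \<omega> * ip N (yv \<omega> l) (V \<omega>) ^ (2 * m)) \<partial>gauss_space N)"
    by (simp add: ip1)
  also have "\<dots> \<le> (\<integral>\<^sup>+\<omega>. ennreal (GC m * (\<lambda>_. 1) \<omega> * ip N (V \<omega>) (V \<omega>) ^ m) \<partial>gauss_space N)"
    by (rule row_int[OF l]) (auto simp: V_def)
  also have "\<dots> = ennreal (GC m)" by (simp add: ip2 prob_space.emeasure_space_1[OF prob_gauss])
  finally show ?thesis .
qed

lemma ss_moment:
  assumes l: "l \<in> {1..N}" and Q: "Q \<ge> 1"
  shows "(\<integral>\<^sup>+\<omega>. ennreal (ss N \<omega> l ^ Q) \<partial>gauss_space N) \<le> ennreal (real N ^ Q * GC Q)"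
proof -
  have N1: "N \<ge> 1" using l by simp
  have "(\<integral>\<^sup>+\<omega>. ennreal (ss N \<omega> l ^ Q) \<partial>gauss_space N) \<le> ennreal (real N ^ (Q - 1) * (\<Sum>j\<in>{1..N}. GC Q))"
  proof (rule nn_sum_bound[where g = "\<lambda>j \<omega>. (\<omega> (l, j)) ^ (2 * Q)"])
    show "(\<integral>\<^sup>+\<omega>. ennreal ((\<omega> (l, j)) ^ (2 * Q)) \<partial>gauss_space N) \<le> ennreal (GC Q)" if "j \<in> {1..N}" for j
      by (rule coord_moment[OF l that])
    show "ss N \<omega> l ^ Q \<le> real N ^ (Q - 1) * (\<Sum>j\<in>{1..N}. (\<omega> (l, j)) ^ (2 * Q))" for \<omega>
    proof -
      have "ss N \<omega> l = (\<Sum>j\<in>{1..N}. (\<omega> (l, j))\<^sup>2)" unfolding ss_def ip_def yv_def by (simp add: power2_eq_square)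
      then have "ss N \<omega> l ^ Q \<le> real (card {1..N}) ^ (Q - 1) * (\<Sum>j\<in>{1..N}. ((\<omega> (l, j))\<^sup>2) ^ Q)"
        using power_mean[of "{1..N}" "\<lambda>j. (\<omega> (l, j))\<^sup>2" Q] Q by simp
      then show ?thesis by (simp add: power_mult[symmetric])
    qed
  qed (auto simp: zero_le_even_power GC_pos less_imp_le)
  also have "\<dots> = ennreal (real N ^ Q * GC Q)"
  proof -
    have e: "real N ^ (Q - 1) * (real N * GC Q) = real N ^ Q * GC Q"
      using Q by (cases Q) auto
    have s: "(\<Sum>j\<in>{1..N}. GC Q) = real N * GC Q" by simp
    show ?thesis unfolding s e ..
  qed
  finally show ?thesis .
qed

lemma cc_moment:
  assumes m: "1 \<le> m" "m < l" and l: "l \<in> {1..N}"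
  shows "(\<integral>\<^sup>+\<omega>. ennreal (cc N \<omega> l m ^ (2 * Q)) \<partial>gauss_space N) \<le> ennreal (GC Q)"
proof -
  have "(\<integral>\<^sup>+\<omega>. ennreal (cc N \<omega> l m ^ (2 * Q)) \<partial>gauss_space N)
      = (\<integral>\<^sup>+\<omega>. ennreal ((\<lambda>_. 1) \<omega> * ip N (yv \<omega> l) (gammav N (yv \<omega>) m) ^ (2 * Q)) \<partial>gauss_space N)"
    by (simp add: cc_def)
  also have "\<dots> \<le> (\<integral>\<^sup>+\<omega>. ennreal (GC Q * (\<lambda>_. 1) \<omega> * ip N (gammav N (yv \<omega>) m) (gammav N (yv \<omega>) m) ^ Q) \<partial>gauss_space N)"
  proof (rule row_int[OF l])
    fix \<omega> \<omega>' :: "nat \<times> nat \<Rightarrow> real" and j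
    assume A: "\<And>x. x \<in> {1..N} \<times> {1..N} \<Longrightarrow> fst x \<noteq> l \<Longrightarrow> \<omega> x = \<omega>' x" and j: "j \<in> {1..N}"
    show "gammav N (yv \<omega>) m j = gammav N (yv \<omega>') m j"
      by (rule gammav_local[OF _ j]) (use A m l in \<open>auto simp: yv_def\<close>)
  qed auto
  also have "\<dots> \<le> (\<integral>\<^sup>+\<omega>. ennreal (GC Q) \<partial>gauss_space N)"
  proof (intro nn_integral_mono ennreal_leI)
    fix \<omega>
    have "ip N (gammav N (yv \<omega>) m) (gammav N (yv \<omega>) m) ^ Q \<le> 1"
      using gammav_norm ip_self_nonneg by (intro power_le_one) auto
    then show "GC Q * 1 * ip N (gammav N (yv \<omega>) m) (gammav N (yv \<omega>) m) ^ Q \<le> GC Q"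
      using GC_pos[of Q] by (simp add: mult_left_le)
  qed
  also have "\<dots> = ennreal (GC Q)" by (rule nn_const)
  finally show ?thesis .
qed

lemma dl_moment:
  assumes l: "l \<in> {1..N}" and Q: "Q \<ge> 1"
  shows "(\<integral>\<^sup>+\<omega>. ennreal (dl N \<omega> l ^ Q) \<partial>gauss_space N) \<le> ennreal (real (l - 1) ^ Q * GC Q)"
proof -
  have "(\<integral>\<^sup>+\<omega>. ennreal (dl N \<omega> l ^ Q) \<partial>gauss_space N) \<le> ennreal (real (l - 1) ^ (Q - 1) * (\<Sum>m\<in>{1..<l}. GC Q))"
  proof (rule nn_sum_bound[where g = "\<lambda>m \<omega>. cc N \<omega> l m ^ (2 * Q)"])
    show "(\<integral>\<^sup>+\<omega>. ennreal (cc N \<omega> l m ^ (2 * Q)) \<partial>gauss_space N) \<le> ennreal (GC Q)" if "m \<in> {1..<l}" for m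
      using that l by (intro cc_moment) auto
    show "dl N \<omega> l ^ Q \<le> real (l - 1) ^ (Q - 1) * (\<Sum>m\<in>{1..<l}. cc N \<omega> l m ^ (2 * Q))" for \<omega>
    proof -
      have "dl N \<omega> l \<le> (\<Sum>m\<in>{1..<l}. (cc N \<omega> l m)\<^sup>2)" unfolding dl_def cc_def by (rule Delta_norm)
      then have "dl N \<omega> l ^ Q \<le> (\<Sum>m\<in>{1..<l}. (cc N \<omega> l m)\<^sup>2) ^ Q"
        by (intro power_mono dl_nonneg)
      also have "\<dots> \<le> real (card {1..<l}) ^ (Q - 1) * (\<Sum>m\<in>{1..<l}. ((cc N \<omega> l m)\<^sup>2) ^ Q)"
        by (rule power_mean) (use Q in auto)
      finally show ?thesis by (simp add: power_mult[symmetric])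
    qed
  qed (auto simp: zero_le_even_power GC_pos less_imp_le)
  also have "\<dots> = ennreal (real (l - 1) ^ Q * GC Q)"
  proof -
    have e: "real (l - 1) ^ (Q - 1) * (real (l - 1) * GC Q) = real (l - 1) ^ Q * GC Q"
      using Q by (cases Q) auto
    have s: "(\<Sum>j\<in>{1..<l}. GC Q) = real (l - 1) * GC Q" by simp
    show ?thesis unfolding s e ..
  qed
  finally show ?thesis .
qed

lemma amgm: "(e::real) > 0 \<Longrightarrow> x * y \<le> e * x\<^sup>2 + y\<^sup>2 / e"
proof -
  assume e: "e > 0"
  have "0 \<le> (e * x - y)\<^sup>2" by simp
  then have "2 * e * (x * y) \<le> e * (e * x\<^sup>2) + y\<^sup>2" by (simp add: power2_eq_square algebra_simps)
  then have "2 * (x * y) \<le> e * x\<^sup>2 + y\<^sup>2 / e" using e by (simp add: field_simps)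
  moreover have "0 \<le> e * x\<^sup>2 + y\<^sup>2 / e" using e by simp
  ultimately show ?thesis by linarith
qed

lemma nn_two_bound:
  fixes X Y :: "'a \<Rightarrow> real"
  assumes [measurable]: "X \<in> borel_measurable M" "Y \<in> borel_measurable M"
    and X0: "\<And>\<omega>. X \<omega> \<ge> 0" and Y0: "\<And>\<omega>. Y \<omega> \<ge> 0"
    and a: "a \<ge> 0" and b: "b \<ge> 0" and BX: "BX \<ge> 0" and BY: "BY \<ge> 0"
    and IX: "(\<integral>\<^sup>+\<omega>. ennreal (X \<omega>) \<partial>M) \<le> ennreal BX"
    and IY: "(\<integral>\<^sup>+\<omega>. ennreal (Y \<omega>) \<partial>M) \<le> ennreal BY"
  shows "(\<integral>\<^sup>+\<omega>. ennreal (a * X \<omega> + b * Y \<omega>) \<partial>M) \<le> ennreal (a * BX + b * BY)"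
proof -
  have "(\<integral>\<^sup>+\<omega>. ennreal (a * X \<omega> + b * Y \<omega>) \<partial>M) = (\<integral>\<^sup>+\<omega>. ennreal a * ennreal (X \<omega>) + ennreal b * ennreal (Y \<omega>) \<partial>M)"
    using X0 Y0 a b by (intro nn_integral_cong) (simp add: ennreal_plus ennreal_mult)
  also have "\<dots> = ennreal a * (\<integral>\<^sup>+\<omega>. ennreal (X \<omega>) \<partial>M) + ennreal b * (\<integral>\<^sup>+\<omega>. ennreal (Y \<omega>) \<partial>M)"
    by (simp add: nn_integral_add nn_integral_cmult)
  also have "\<dots> \<le> ennreal a * ennreal BX + ennreal b * ennreal BY"
    by (intro add_mono mult_left_mono IX IY) auto
  also have "\<dots> = ennreal (a * BX + b * BY)"
    using a b BX BY by (simp add: ennreal_plus ennreal_mult)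
  finally show ?thesis .
qed

lemma ds_moment:
  assumes l: "l \<in> {1..N}" and q: "q \<ge> 1"
  shows "(\<integral>\<^sup>+\<omega>. ennreal (dl N \<omega> l ^ q * ss N \<omega> l ^ q) \<partial>gauss_space N)
     \<le> ennreal (real (l - 1) ^ (q - 1) * (\<Sum>m\<in>{1..<l}. 2 * real N ^ q * GC (2 * q)))"
proof (rule nn_sum_bound[where g = "\<lambda>m \<omega>. real N ^ q * (cc N \<omega> l m ^ (2 * (2 * q))) + (1 / real N ^ q) * ss N \<omega> l ^ (2 * q)"])
  have N1: "N \<ge> 1" using l by simp
  show "(\<integral>\<^sup>+\<omega>. ennreal (real N ^ q * (cc N \<omega> l m ^ (2 * (2 * q))) + (1 / real N ^ q) * ss N \<omega> l ^ (2 * q)) \<partial>gauss_space N)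
      \<le> ennreal (2 * real N ^ q * GC (2 * q))" if m: "m \<in> {1..<l}" for m
  proof -
    have "(\<integral>\<^sup>+\<omega>. ennreal (real N ^ q * (cc N \<omega> l m ^ (2 * (2 * q))) + (1 / real N ^ q) * ss N \<omega> l ^ (2 * q)) \<partial>gauss_space N)
      \<le> ennreal (real N ^ q * GC (2 * q) + (1 / real N ^ q) * (real N ^ (2 * q) * GC (2 * q)))"
    proof -
      have I1: "(\<integral>\<^sup>+\<omega>. ennreal (cc N \<omega> l m ^ (2 * (2 * q))) \<partial>gauss_space N) \<le> ennreal (GC (2 * q))"
        by (rule cc_moment) (use m l in auto)
      have I2: "(\<integral>\<^sup>+\<omega>. ennreal (ss N \<omega> l ^ (2 * q)) \<partial>gauss_space N) \<le> ennreal (real N ^ (2 * q) * GC (2 * q))"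
        by (rule ss_moment) (use l q in auto)
      show ?thesis
        by (rule nn_two_bound[OF _ _ _ _ _ _ _ _ I1 I2])
           (use GC_pos[of "2 * q"] in \<open>auto simp: zero_le_even_power ss_nonneg less_imp_le\<close>)
    qed
    also have "real N ^ q * GC (2 * q) + (1 / real N ^ q) * (real N ^ (2 * q) * GC (2 * q)) = 2 * real N ^ q * GC (2 * q)"
    proof -
      have p: "real N ^ q > 0" using N1 by simp
      have e: "real N ^ (2 * q) = real N ^ q * real N ^ q" by (simp add: mult_2 power_add)
      have f: "1 / real N ^ q * (real N ^ q * real N ^ q * GC (2 * q)) = real N ^ q * GC (2 * q)" using p by simp
      show ?thesis unfolding e f by simp
    qed
    finally show ?thesis .
  qed
  show "dl N \<omega> l ^ q * ss N \<omega> l ^ q \<le> real (l - 1) ^ (q - 1) *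
      (\<Sum>m\<in>{1..<l}. real N ^ q * (cc N \<omega> l m ^ (2 * (2 * q))) + (1 / real N ^ q) * ss N \<omega> l ^ (2 * q))" for \<omega>
  proof -
    have "dl N \<omega> l \<le> (\<Sum>m\<in>{1..<l}. (cc N \<omega> l m)\<^sup>2)" unfolding dl_def cc_def by (rule Delta_norm)
    then have "dl N \<omega> l ^ q \<le> (\<Sum>m\<in>{1..<l}. (cc N \<omega> l m)\<^sup>2) ^ q"
      by (intro power_mono dl_nonneg)
    also have "\<dots> \<le> real (card {1..<l}) ^ (q - 1) * (\<Sum>m\<in>{1..<l}. ((cc N \<omega> l m)\<^sup>2) ^ q)"
      by (rule power_mean) (use q in auto)
    finally have A: "dl N \<omega> l ^ q \<le> real (l - 1) ^ (q - 1) * (\<Sum>m\<in>{1..<l}. cc N \<omega> l m ^ (2 * q))"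
      by (simp add: power_mult[symmetric] mult.commute)
    have "dl N \<omega> l ^ q * ss N \<omega> l ^ q \<le> real (l - 1) ^ (q - 1) * (\<Sum>m\<in>{1..<l}. cc N \<omega> l m ^ (2 * q)) * ss N \<omega> l ^ q"
      by (intro mult_right_mono A) (simp add: ss_nonneg)
    also have "\<dots> = real (l - 1) ^ (q - 1) * (\<Sum>m\<in>{1..<l}. cc N \<omega> l m ^ (2 * q) * ss N \<omega> l ^ q)"
      by (simp add: sum_distrib_right mult.assoc)
    also have "\<dots> \<le> real (l - 1) ^ (q - 1) * (\<Sum>m\<in>{1..<l}. real N ^ q * (cc N \<omega> l m ^ (2 * q))\<^sup>2 + (ss N \<omega> l ^ q)\<^sup>2 / real N ^ q)"
      using l by (intro mult_left_mono sum_mono amgm) auto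
    also have "\<dots> = real (l - 1) ^ (q - 1) * (\<Sum>m\<in>{1..<l}. real N ^ q * (cc N \<omega> l m ^ (2 * (2 * q))) + (1 / real N ^ q) * ss N \<omega> l ^ (2 * q))"
      by (simp add: power_mult[symmetric] mult.commute)
    finally show ?thesis .
  qed
qed (auto simp: zero_le_even_power ss_nonneg GC_pos less_imp_le)

lemma ds_moment':
  assumes l: "l \<in> {1..N}" and q: "q \<ge> 1"
  shows "(\<integral>\<^sup>+\<omega>. ennreal (dl N \<omega> l ^ q * ss N \<omega> l ^ q) \<partial>gauss_space N)
     \<le> ennreal (2 * GC (2 * q) * real (l - 1) ^ q * real N ^ q)"
proof -
  have "real (l - 1) ^ (q - 1) * (\<Sum>m\<in>{1..<l}. 2 * real N ^ q * GC (2 * q)) = real (l - 1) ^ (q - 1) * real (l - 1) * (2 * real N ^ q * GC (2 * q))"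
    by simp
  also have "\<dots> = 2 * GC (2 * q) * real (l - 1) ^ q * real N ^ q"
    using q by (cases q) (auto simp: mult_ac)
  finally have eq: "real (l - 1) ^ (q - 1) * (\<Sum>m\<in>{1..<l}. 2 * real N ^ q * GC (2 * q)) = 2 * GC (2 * q) * real (l - 1) ^ q * real N ^ q" .
  show ?thesis using ds_moment[OF l q] unfolding eq .
qed

lemma ss_local:
  assumes "l \<in> {1..N}" "l \<noteq> r" "\<And>x. x \<in> {1..N} \<times> {1..N} \<Longrightarrow> fst x \<noteq> r \<Longrightarrow> \<omega> x = \<omega>' x"
  shows "ss N \<omega> l = ss N \<omega>' l"
  unfolding ss_def ip_def yv_def using assms by (intro sum.cong) auto

lemma Delta_local':
  assumes "l \<in> {1..N}" "l < r" "\<And>x. x \<in> {1..N} \<times> {1..N} \<Longrightarrow> fst x \<noteq> r \<Longrightarrow> \<omega> x = \<omega>' x" "j \<in> {1..N}"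
  shows "Delta N (yv \<omega>) l j = Delta N (yv \<omega>') l j"
  by (rule Delta_local[OF _ assms(4)]) (use assms(1-3) in \<open>auto simp: yv_def\<close>)

lemma dl_local:
  assumes "l \<in> {1..N}" "l < r" "\<And>x. x \<in> {1..N} \<times> {1..N} \<Longrightarrow> fst x \<noteq> r \<Longrightarrow> \<omega> x = \<omega>' x"
  shows "dl N \<omega> l = dl N \<omega>' l"
  unfolding dl_def by (intro ip_cong) (use Delta_local'[OF assms] in auto)

lemma as_moment:
  assumes l: "1 \<le> l" "l < i" and i: "i \<le> N" and q: "q \<ge> 1"
  shows "(\<integral>\<^sup>+\<omega>. ennreal (aa N \<omega> i l ^ (2 * q) * ss N \<omega> l ^ q) \<partial>gauss_space N)
     \<le> ennreal (GC q * (2 * GC (2 * q) * real (l - 1) ^ q * real N ^ q))"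
proof -
  have iN: "i \<in> {1..N}" and lN: "l \<in> {1..N}" using l i by auto
  have Fss: "(\<lambda>\<omega>. ss N \<omega> l ^ q) \<in> borel_measurable (gauss_space N)" by measurable
  have Fdl: "(\<lambda>\<omega>. dl N \<omega> l ^ q) \<in> borel_measurable (gauss_space N)" by measurable
  have VD: "\<And>j. (\<lambda>\<omega>. Delta N (yv \<omega>) l j) \<in> borel_measurable (gauss_space N)" by measurable
  have "(\<integral>\<^sup>+\<omega>. ennreal (aa N \<omega> i l ^ (2 * q) * ss N \<omega> l ^ q) \<partial>gauss_space N)
      = (\<integral>\<^sup>+\<omega>. ennreal ((\<lambda>\<omega>. ss N \<omega> l ^ q) \<omega> * ip N (yv \<omega> i) ((\<lambda>\<omega>. Delta N (yv \<omega>) l) \<omega>) ^ (2 * q)) \<partial>gauss_space N)"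
    by (simp add: aa_def mult.commute)
  also have "\<dots> \<le> (\<integral>\<^sup>+\<omega>. ennreal (GC q * (\<lambda>\<omega>. ss N \<omega> l ^ q) \<omega> * ip N ((\<lambda>\<omega>. Delta N (yv \<omega>) l) \<omega>) ((\<lambda>\<omega>. Delta N (yv \<omega>) l) \<omega>) ^ q) \<partial>gauss_space N)"
  proof (rule row_int[OF iN Fss _ VD])
    fix \<omega> \<omega>' :: "nat \<times> nat \<Rightarrow> real"
    assume A: "\<And>x. x \<in> {1..N} \<times> {1..N} \<Longrightarrow> fst x \<noteq> i \<Longrightarrow> \<omega> x = \<omega>' x"
    have "ss N \<omega> l = ss N \<omega>' l" by (rule ss_local[OF lN, of i]) (use l A in auto)
    then show "ss N \<omega> l ^ q = ss N \<omega>' l ^ q" by simp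
    show "Delta N (yv \<omega>) l j = Delta N (yv \<omega>') l j" if "j \<in> {1..N}" for j
      by (rule Delta_local'[OF lN l(2) A that])
  qed (simp add: ss_nonneg)
  also have "\<dots> = (\<integral>\<^sup>+\<omega>. ennreal (GC q) * ennreal (dl N \<omega> l ^ q * ss N \<omega> l ^ q) \<partial>gauss_space N)"
  proof (intro nn_integral_cong)
    fix \<omega>
    have "0 \<le> dl N \<omega> l ^ q * ss N \<omega> l ^ q" by (simp add: dl_nonneg ss_nonneg)
    then have "ennreal (GC q) * ennreal (dl N \<omega> l ^ q * ss N \<omega> l ^ q) = ennreal (GC q * (dl N \<omega> l ^ q * ss N \<omega> l ^ q))"
      using GC_pos[of q] by (simp add: ennreal_mult)
    then show "ennreal (GC q * ss N \<omega> l ^ q * ip N (Delta N (yv \<omega>) l) (Delta N (yv \<omega>) l) ^ q) = ennreal (GC q) * ennreal (dl N \<omega> l ^ q * ss N \<omega> l ^ q)"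
      by (simp add: dl_def mult_ac)
  qed
  also have "\<dots> = ennreal (GC q) * (\<integral>\<^sup>+\<omega>. ennreal (dl N \<omega> l ^ q * ss N \<omega> l ^ q) \<partial>gauss_space N)"
    by (rule nn_integral_cmult) measurable
  also have "\<dots> \<le> ennreal (GC q) * ennreal (2 * GC (2 * q) * real (l - 1) ^ q * real N ^ q)"
    by (intro mult_left_mono ds_moment'[OF lN q]) auto
  also have "\<dots> = ennreal (GC q * (2 * GC (2 * q) * real (l - 1) ^ q * real N ^ q))"
    using GC_pos[of q] GC_pos[of "2*q"] by (simp add: ennreal_mult[symmetric])
  finally show ?thesis .
qed

lemma ad_moment:
  assumes l: "1 \<le> l" "l < i" and i: "i \<le> N" and q: "q \<ge> 1"
  shows "(\<integral>\<^sup>+\<omega>. ennreal (aa N \<omega> i l ^ (2 * q) * dl N \<omega> l ^ q) \<partial>gauss_space N)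
     \<le> ennreal (GC q * (real (l - 1) ^ (2 * q) * GC (2 * q)))"
proof -
  have iN: "i \<in> {1..N}" and lN: "l \<in> {1..N}" using l i by auto
  have Fss: "(\<lambda>\<omega>. ss N \<omega> l ^ q) \<in> borel_measurable (gauss_space N)" by measurable
  have Fdl: "(\<lambda>\<omega>. dl N \<omega> l ^ q) \<in> borel_measurable (gauss_space N)" by measurable
  have VD: "\<And>j. (\<lambda>\<omega>. Delta N (yv \<omega>) l j) \<in> borel_measurable (gauss_space N)" by measurable
  have "(\<integral>\<^sup>+\<omega>. ennreal (aa N \<omega> i l ^ (2 * q) * dl N \<omega> l ^ q) \<partial>gauss_space N)
      = (\<integral>\<^sup>+\<omega>. ennreal ((\<lambda>\<omega>. dl N \<omega> l ^ q) \<omega> * ip N (yv \<omega> i) ((\<lambda>\<omega>. Delta N (yv \<omega>) l) \<omega>) ^ (2 * q)) \<partial>gauss_space N)"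
    by (simp add: aa_def mult.commute)
  also have "\<dots> \<le> (\<integral>\<^sup>+\<omega>. ennreal (GC q * (\<lambda>\<omega>. dl N \<omega> l ^ q) \<omega> * ip N ((\<lambda>\<omega>. Delta N (yv \<omega>) l) \<omega>) ((\<lambda>\<omega>. Delta N (yv \<omega>) l) \<omega>) ^ q) \<partial>gauss_space N)"
  proof (rule row_int[OF iN Fdl _ VD])
    fix \<omega> \<omega>' :: "nat \<times> nat \<Rightarrow> real"
    assume A: "\<And>x. x \<in> {1..N} \<times> {1..N} \<Longrightarrow> fst x \<noteq> i \<Longrightarrow> \<omega> x = \<omega>' x"
    show "dl N \<omega> l ^ q = dl N \<omega>' l ^ q" using dl_local[OF lN l(2) A] by simp
    show "Delta N (yv \<omega>) l j = Delta N (yv \<omega>') l j" if "j \<in> {1..N}" for j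
      by (rule Delta_local'[OF lN l(2) A that])
  qed (simp add: dl_nonneg)
  also have "\<dots> = (\<integral>\<^sup>+\<omega>. ennreal (GC q) * ennreal (dl N \<omega> l ^ (2 * q)) \<partial>gauss_space N)"
  proof (intro nn_integral_cong)
    fix \<omega>
    have "0 \<le> dl N \<omega> l ^ (2 * q)" by (simp add: dl_nonneg)
    then have "ennreal (GC q) * ennreal (dl N \<omega> l ^ (2 * q)) = ennreal (GC q * dl N \<omega> l ^ (2 * q))"
      using GC_pos[of q] by (simp add: ennreal_mult)
    moreover have "x ^ q * x ^ q = x ^ (2 * q)" for x :: real by (simp add: power_add[symmetric] mult_2)
    ultimately show "ennreal (GC q * dl N \<omega> l ^ q * ip N (Delta N (yv \<omega>) l) (Delta N (yv \<omega>) l) ^ q) = ennreal (GC q) * ennreal (dl N \<omega> l ^ (2 * q))"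
      unfolding dl_def by (simp only: mult.assoc)
  qed
  also have "\<dots> = ennreal (GC q) * (\<integral>\<^sup>+\<omega>. ennreal (dl N \<omega> l ^ (2 * q)) \<partial>gauss_space N)"
    by (rule nn_integral_cmult) measurable
  also have "\<dots> \<le> ennreal (GC q) * ennreal (real (l - 1) ^ (2 * q) * GC (2 * q))"
    by (intro mult_left_mono dl_moment[OF lN]) (use q in auto)
  also have "\<dots> = ennreal (GC q * (real (l - 1) ^ (2 * q) * GC (2 * q)))"
    using GC_pos[of q] GC_pos[of "2*q"] by (simp add: ennreal_mult[symmetric])
  finally show ?thesis .
qed

lemma dd_pt:
  assumes N: "N \<ge> 1"
  shows "ip N (dd N (yv \<omega>) i) (dd N (yv \<omega>) i)
     \<le> 2 / (real N)\<^sup>2 * ((\<Sum>l\<in>{1..<i}. (aa N \<omega> i l)\<^sup>2 * ss N \<omega> l)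
                       + real (card {1..<i}) * (\<Sum>l\<in>{1..<i}. (aa N \<omega> i l)\<^sup>2 * dl N \<omega> l))"
proof -
  let ?y = "yv \<omega>"
  let ?L = "{1..<i}"
  let ?a = "\<lambda>l. aa N \<omega> i l"
  define A where "A = (\<lambda>j. \<Sum>l\<in>?L. ?a l * wv N ?y l j)"
  define B where "B = (\<lambda>j. \<Sum>l\<in>?L. ?a l * Delta N ?y l j)"
  have T: "dd N ?y i = (\<lambda>j. (- (1 / real N)) * (A j + B j))"
  proof
    fix j
    have "(\<Sum>l\<in>?L. ip N (?y i) (Delta N ?y l) * ?y l j) = A j + B j"
      unfolding A_def B_def aa_def sum.distrib[symmetric]
      by (intro sum.cong refl) (simp add: wv_Delta algebra_simps)
    then show "dd N ?y i j = (- (1 / real N)) * (A j + B j)" by (simp add: dd_eq)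
  qed
  have ipdd: "ip N (dd N ?y i) (dd N ?y i) = (1 / real N)\<^sup>2 * ip N (\<lambda>j. A j + B j) (\<lambda>j. A j + B j)"
    unfolding T ip_scale_left ip_scale_right by (simp add: power2_eq_square)
  have AB: "ip N (\<lambda>j. A j + B j) (\<lambda>j. A j + B j) \<le> 2 * ip N A A + 2 * ip N B B"
  proof -
    have "ip N (\<lambda>j. A j + B j) (\<lambda>j. A j + B j) = (\<Sum>j\<in>{1..N}. (A j + B j)\<^sup>2)" unfolding ip_def by (simp add: power2_eq_square)
    also have "\<dots> \<le> (\<Sum>j\<in>{1..N}. 2 * (A j)\<^sup>2 + 2 * (B j)\<^sup>2)"
    proof (intro sum_mono)
      fix j
      have "0 \<le> (A j - B j)\<^sup>2" by simp
      then show "(A j + B j)\<^sup>2 \<le> 2 * (A j)\<^sup>2 + 2 * (B j)\<^sup>2" by (simp add: power2_eq_square algebra_simps)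
    qed
    also have "\<dots> = 2 * ip N A A + 2 * ip N B B"
      unfolding ip_def by (simp add: sum.distrib sum_distrib_left power2_eq_square)
    finally show ?thesis .
  qed
  have AA: "ip N A A \<le> (\<Sum>l\<in>?L. (?a l)\<^sup>2 * ss N \<omega> l)"
  proof -
    have "ip N A A = (\<Sum>l\<in>?L. (?a l)\<^sup>2 * ip N (wv N ?y l) (wv N ?y l))"
      unfolding A_def by (rule ip_orth_sum) (auto intro: wv_orth')
    also have "\<dots> \<le> (\<Sum>l\<in>?L. (?a l)\<^sup>2 * ss N \<omega> l)"
      unfolding ss_def by (intro sum_mono mult_left_mono wv_norm_le) auto
    finally show ?thesis .
  qed
  have BB: "ip N B B \<le> real (card ?L) * (\<Sum>l\<in>?L. (?a l)\<^sup>2 * dl N \<omega> l)"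
  proof -
    have "ip N B B = (\<Sum>j\<in>{1..N}. (B j)\<^sup>2)" unfolding ip_def by (simp add: power2_eq_square)
    also have "\<dots> \<le> (\<Sum>j\<in>{1..N}. real (card ?L) * (\<Sum>l\<in>?L. (?a l * Delta N ?y l j)\<^sup>2))"
    proof (intro sum_mono)
      fix j
      show "(B j)\<^sup>2 \<le> real (card ?L) * (\<Sum>l\<in>?L. (?a l * Delta N ?y l j)\<^sup>2)"
        unfolding B_def using sum_squared_le_sum_of_squares[of "\<lambda>l. ?a l * Delta N ?y l j" ?L] by (simp add: mult.commute)
    qed
    also have "\<dots> = real (card ?L) * (\<Sum>j\<in>{1..N}. (\<Sum>l\<in>?L. (?a l * Delta N ?y l j)\<^sup>2))"
      by (simp add: sum_distrib_left)
    also have "(\<Sum>j\<in>{1..N}. (\<Sum>l\<in>?L. (?a l * Delta N ?y l j)\<^sup>2)) = (\<Sum>l\<in>?L. (?a l)\<^sup>2 * dl N \<omega> l)"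
      unfolding dl_def ip_def
      by (subst sum.swap) (simp add: sum_distrib_left power_mult_distrib power2_eq_square mult_ac)
    finally show ?thesis .
  qed
  show ?thesis
  proof -
    have "ip N (dd N ?y i) (dd N ?y i) \<le> (1 / real N)\<^sup>2 * (2 * (\<Sum>l\<in>?L. (?a l)\<^sup>2 * ss N \<omega> l) + 2 * (real (card ?L) * (\<Sum>l\<in>?L. (?a l)\<^sup>2 * dl N \<omega> l)))"
      unfolding ipdd using AB AA BB by (intro mult_left_mono) auto
    also have "\<dots> = 2 / (real N)\<^sup>2 * ((\<Sum>l\<in>?L. (?a l)\<^sup>2 * ss N \<omega> l) + real (card ?L) * (\<Sum>l\<in>?L. (?a l)\<^sup>2 * dl N \<omega> l))"
      by (simp add: power_divide algebra_simps)
    finally show ?thesis .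
  qed
qed

lemma sum_pow2: "(x::real) \<ge> 0 \<Longrightarrow> y \<ge> 0 \<Longrightarrow> (x + y) ^ q \<le> 2 ^ q * (x ^ q + y ^ q)"
proof -
  assume x: "x \<ge> 0" and y: "y \<ge> 0"
  have "(x + y) ^ q \<le> (2 * max x y) ^ q" using x y by (intro power_mono) auto
  also have "\<dots> = 2 ^ q * (max x y) ^ q" by (simp add: power_mult_distrib)
  also have "\<dots> \<le> 2 ^ q * (x ^ q + y ^ q)"
    using x y by (intro mult_left_mono) (auto simp: max_def)
  finally show ?thesis .
qed

lemma dd_pow:
  assumes N: "N \<ge> 1" and q: "q \<ge> 1"
  shows "ip N (dd N (yv \<omega>) i) (dd N (yv \<omega>) i) ^ q
     \<le> (4 / (real N)\<^sup>2) ^ q * (\<Sum>l\<in>{1..<i}. real (card {1..<i}) ^ (q - 1) * (aa N \<omega> i l ^ (2 * q) * ss N \<omega> l ^ q)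
                                       + real (card {1..<i}) ^ (2 * q - 1) * (aa N \<omega> i l ^ (2 * q) * dl N \<omega> l ^ q))"
proof -
  let ?L = "{1..<i}"
  let ?n = "real (card ?L)"
  let ?a = "\<lambda>l. aa N \<omega> i l"
  define X where "X = (\<Sum>l\<in>?L. (?a l)\<^sup>2 * ss N \<omega> l)"
  define Y where "Y = (\<Sum>l\<in>?L. (?a l)\<^sup>2 * dl N \<omega> l)"
  have X0: "X \<ge> 0" unfolding X_def by (intro sum_nonneg) (simp add: ss_nonneg)
  have Y0: "Y \<ge> 0" unfolding Y_def by (intro sum_nonneg) (simp add: dl_nonneg)
  have "ip N (dd N (yv \<omega>) i) (dd N (yv \<omega>) i) ^ q \<le> (2 / (real N)\<^sup>2 * (X + ?n * Y)) ^ q"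
    unfolding X_def Y_def by (intro power_mono dd_pt N ip_self_nonneg)
  also have "\<dots> = (2 / (real N)\<^sup>2) ^ q * (X + ?n * Y) ^ q" by (rule power_mult_distrib)
  also have "\<dots> \<le> (2 / (real N)\<^sup>2) ^ q * (2 ^ q * (X ^ q + (?n * Y) ^ q))"
    using X0 Y0 by (intro mult_left_mono sum_pow2) auto
  also have "\<dots> = (4 / (real N)\<^sup>2) ^ q * (X ^ q + ?n ^ q * Y ^ q)"
  proof -
    have "(2 / (real N)\<^sup>2) ^ q * 2 ^ q = (4 / (real N)\<^sup>2) ^ q"
      by (simp add: power_mult_distrib[symmetric])
    then show ?thesis by (simp add: power_mult_distrib mult.assoc[symmetric])
  qed
  also have "\<dots> \<le> (4 / (real N)\<^sup>2) ^ q * (?n ^ (q - 1) * (\<Sum>l\<in>?L. ?a l ^ (2 * q) * ss N \<omega> l ^ q)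
                                        + ?n ^ q * (?n ^ (q - 1) * (\<Sum>l\<in>?L. ?a l ^ (2 * q) * dl N \<omega> l ^ q)))"
  proof -
    have "X ^ q \<le> ?n ^ (q - 1) * (\<Sum>l\<in>?L. ((?a l)\<^sup>2 * ss N \<omega> l) ^ q)"
      unfolding X_def by (rule power_mean) (use q in \<open>auto simp: ss_nonneg\<close>)
    also have "\<dots> = ?n ^ (q - 1) * (\<Sum>l\<in>?L. ?a l ^ (2 * q) * ss N \<omega> l ^ q)"
      by (simp add: power_mult_distrib power_mult[symmetric])
    finally have XX: "X ^ q \<le> ?n ^ (q - 1) * (\<Sum>l\<in>?L. ?a l ^ (2 * q) * ss N \<omega> l ^ q)" .
    have "Y ^ q \<le> ?n ^ (q - 1) * (\<Sum>l\<in>?L. ((?a l)\<^sup>2 * dl N \<omega> l) ^ q)"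
      unfolding Y_def by (rule power_mean) (use q in \<open>auto simp: dl_nonneg\<close>)
    also have "\<dots> = ?n ^ (q - 1) * (\<Sum>l\<in>?L. ?a l ^ (2 * q) * dl N \<omega> l ^ q)"
      by (simp add: power_mult_distrib power_mult[symmetric])
    finally have YY: "Y ^ q \<le> ?n ^ (q - 1) * (\<Sum>l\<in>?L. ?a l ^ (2 * q) * dl N \<omega> l ^ q)" .
    show ?thesis
      using XX YY by (intro mult_left_mono add_mono) auto
  qed
  also have "\<dots> = (4 / (real N)\<^sup>2) ^ q * (\<Sum>l\<in>?L. ?n ^ (q - 1) * (?a l ^ (2 * q) * ss N \<omega> l ^ q)
                                       + ?n ^ (2 * q - 1) * (?a l ^ (2 * q) * dl N \<omega> l ^ q))"
  proof -
    have e: "?n ^ q * ?n ^ (q - 1) = ?n ^ (2 * q - 1)"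
    proof -
      have "q + (q - 1) = 2 * q - 1" using q by arith
      then show ?thesis by (simp only: power_add[symmetric])
    qed
    have s: "(\<Sum>l\<in>?L. ?n ^ (q - 1) * (?a l ^ (2 * q) * ss N \<omega> l ^ q) + ?n ^ (2 * q - 1) * (?a l ^ (2 * q) * dl N \<omega> l ^ q))
      = ?n ^ (q - 1) * (\<Sum>l\<in>?L. ?a l ^ (2 * q) * ss N \<omega> l ^ q) + ?n ^ (2 * q - 1) * (\<Sum>l\<in>?L. ?a l ^ (2 * q) * dl N \<omega> l ^ q)"
      by (simp only: sum.distrib sum_distrib_left)
    have t: "?n ^ q * (?n ^ (q - 1) * (\<Sum>l\<in>?L. ?a l ^ (2 * q) * dl N \<omega> l ^ q)) = ?n ^ (2 * q - 1) * (\<Sum>l\<in>?L. ?a l ^ (2 * q) * dl N \<omega> l ^ q)"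
      by (simp only: mult.assoc[symmetric] e)
    show ?thesis unfolding s t ..
  qed
  finally show ?thesis .
qed

lemma dd_moment:
  assumes i: "1 \<le> i" "i \<le> N" and q: "q \<ge> 1"
  shows "(\<integral>\<^sup>+\<omega>. ennreal (ip N (dd N (yv \<omega>) i) (dd N (yv \<omega>) i) ^ q) \<partial>gauss_space N)
     \<le> ennreal ((4 / (real N)\<^sup>2) ^ q * (GC q * GC (2 * q)) * (2 * real i ^ (2 * q) * real N ^ q + real i ^ (4 * q)))"
proof -
  have N: "N \<ge> 1" using i by simp
  let ?L = "{1..<i}"
  let ?n = "real (card ?L)"
  define B where "B = (\<lambda>l. ?n ^ (q - 1) * (GC q * (2 * GC (2 * q) * real (l - 1) ^ q * real N ^ q))
                        + ?n ^ (2 * q - 1) * (GC q * (real (l - 1) ^ (2 * q) * GC (2 * q))))"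
  define Bi where "Bi = real i ^ (q - 1) * (GC q * (2 * GC (2 * q) * real i ^ q * real N ^ q))
                        + real i ^ (2 * q - 1) * (GC q * (real i ^ (2 * q) * GC (2 * q)))"
  have GC0: "GC q \<ge> 0" "GC (2 * q) \<ge> 0" using GC_pos[of q] GC_pos[of "2*q"] by auto
  have step1: "(\<integral>\<^sup>+\<omega>. ennreal (ip N (dd N (yv \<omega>) i) (dd N (yv \<omega>) i) ^ q) \<partial>gauss_space N)
     \<le> ennreal ((4 / (real N)\<^sup>2) ^ q * (\<Sum>l\<in>?L. B l))"
  proof (rule nn_sum_bound[where g = "\<lambda>l \<omega>. ?n ^ (q - 1) * (aa N \<omega> i l ^ (2 * q) * ss N \<omega> l ^ q)
                                       + ?n ^ (2 * q - 1) * (aa N \<omega> i l ^ (2 * q) * dl N \<omega> l ^ q)"])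
    fix l assume l: "l \<in> ?L"
    have IX: "(\<integral>\<^sup>+\<omega>. ennreal (aa N \<omega> i l ^ (2 * q) * ss N \<omega> l ^ q) \<partial>gauss_space N)
       \<le> ennreal (GC q * (2 * GC (2 * q) * real (l - 1) ^ q * real N ^ q))"
      by (rule as_moment) (use l i q in auto)
    have IY: "(\<integral>\<^sup>+\<omega>. ennreal (aa N \<omega> i l ^ (2 * q) * dl N \<omega> l ^ q) \<partial>gauss_space N)
       \<le> ennreal (GC q * (real (l - 1) ^ (2 * q) * GC (2 * q)))"
      by (rule ad_moment) (use l i q in auto)
    show "(\<integral>\<^sup>+\<omega>. ennreal (?n ^ (q - 1) * (aa N \<omega> i l ^ (2 * q) * ss N \<omega> l ^ q)
                                       + ?n ^ (2 * q - 1) * (aa N \<omega> i l ^ (2 * q) * dl N \<omega> l ^ q)) \<partial>gauss_space N) \<le> ennreal (B l)"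
      unfolding B_def
      by (rule nn_two_bound[OF _ _ _ _ _ _ _ _ IX IY]) (use GC0 in \<open>auto simp: ss_nonneg dl_nonneg zero_le_even_power\<close>)
    show "0 \<le> B l" unfolding B_def using GC0 by simp
  next
    fix \<omega>
    show "ip N (dd N (yv \<omega>) i) (dd N (yv \<omega>) i) ^ q \<le> (4 / (real N)\<^sup>2) ^ q *
       (\<Sum>l\<in>?L. ?n ^ (q - 1) * (aa N \<omega> i l ^ (2 * q) * ss N \<omega> l ^ q) + ?n ^ (2 * q - 1) * (aa N \<omega> i l ^ (2 * q) * dl N \<omega> l ^ q))"
      by (rule dd_pow[OF N q])
  qed (auto simp: ss_nonneg dl_nonneg zero_le_even_power)
  have nle: "?n \<le> real i" by simp
  have BB: "B l \<le> Bi" if "l \<in> ?L" for l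
  proof -
    have ll: "real (l - 1) \<le> real i" using that by simp
    show ?thesis unfolding B_def Bi_def using GC0 nle ll
      by (intro add_mono mult_mono power_mono mult_left_mono) (auto simp: zero_le_mult_iff)
  qed
  have "(\<Sum>l\<in>?L. B l) \<le> (\<Sum>l\<in>?L. Bi)" using BB by (rule sum_mono)
  also have "\<dots> = ?n * Bi" by simp
  also have "\<dots> \<le> real i * Bi" using nle GC0 unfolding Bi_def by (intro mult_right_mono) auto
  also have "\<dots> = GC q * GC (2 * q) * (2 * real i ^ (2 * q) * real N ^ q + real i ^ (4 * q))"
  proof -
    have e1: "real i * real i ^ (q - 1) * real i ^ q = real i ^ (2 * q)"
    proof -
      have "Suc (q - 1) + q = 2 * q" using q by arith
      then show ?thesis by (metis power_Suc power_add mult.assoc)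
    qed
    have e2: "real i * real i ^ (2 * q - 1) * real i ^ (2 * q) = real i ^ (4 * q)"
    proof -
      have "Suc (2 * q - 1) + 2 * q = 4 * q" using q by arith
      then show ?thesis by (metis power_Suc power_add mult.assoc)
    qed
    have "real i * Bi = 2 * GC q * GC (2 * q) * real N ^ q * (real i * real i ^ (q - 1) * real i ^ q)
        + GC q * GC (2 * q) * (real i * real i ^ (2 * q - 1) * real i ^ (2 * q))"
      unfolding Bi_def by (simp add: algebra_simps)
    also have "\<dots> = GC q * GC (2 * q) * (2 * real i ^ (2 * q) * real N ^ q + real i ^ (4 * q))"
      unfolding e1 e2 by (simp add: algebra_simps)
    finally show ?thesis .
  qed
  finally have "(\<Sum>l\<in>?L. B l) \<le> GC q * GC (2 * q) * (2 * real i ^ (2 * q) * real N ^ q + real i ^ (4 * q))" .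
  then have "(4 / (real N)\<^sup>2) ^ q * (\<Sum>l\<in>?L. B l) \<le> (4 / (real N)\<^sup>2) ^ q * (GC q * GC (2 * q) * (2 * real i ^ (2 * q) * real N ^ q + real i ^ (4 * q)))"
    by (intro mult_left_mono) auto
  then show ?thesis using step1 by (simp add: mult.assoc order_trans[OF _ ennreal_leI])
qed

lemma kbound:
  fixes \<delta> :: real and k :: "nat \<Rightarrow> nat"
  assumes "\<delta> > 0"
    and O: "(\<lambda>N. real (k N)) \<in> O(\<lambda>N. real N powr (1/2 - \<delta>))"
    and kN: "\<forall>N. k N \<le> N"
  shows "\<exists>c'>0. \<forall>N\<ge>1. real (k N) / sqrt (real N) \<le> c' * real N powr (- \<delta>)"
proof -
  obtain c where c: "c > 0" and ev: "eventually (\<lambda>N. norm (real (k N)) \<le> c * norm (real N powr (1/2 - \<delta>))) at_top"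
    using O by (elim landau_o.bigE)
  then obtain N0 where N0: "\<And>N. N \<ge> N0 \<Longrightarrow> real (k N) \<le> c * real N powr (1/2 - \<delta>)"
    by (auto simp: eventually_at_top_linorder)
  define M where "M = real (max N0 1)"
  have M1: "M \<ge> 1" unfolding M_def by simp
  define c' where "c' = c + sqrt M * M powr \<delta>"
  have c'pos: "c' > 0" unfolding c'_def using c M1 by (simp add: add_pos_nonneg)
  have "real (k N) / sqrt (real N) \<le> c' * real N powr (- \<delta>)" if N1: "N \<ge> 1" for N
  proof (cases "N \<ge> N0")
    case True
    have sq: "real N powr (1/2 - \<delta>) = sqrt (real N) * real N powr (- \<delta>)"
      using N1 by (simp add: powr_add[symmetric] powr_half_sqrt[symmetric])
    have sp: "sqrt (real N) > 0" using N1 by simp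
    have "real (k N) / sqrt (real N) \<le> c * real N powr (1/2 - \<delta>) / sqrt (real N)"
      using N0[OF True] sp by (simp add: divide_right_mono)
    also have "\<dots> = c * real N powr (- \<delta>)" using sp unfolding sq by simp
    also have "\<dots> \<le> c' * real N powr (- \<delta>)" unfolding c'_def using M1 by (intro mult_right_mono) auto
    finally show ?thesis .
  next
    case False
    have NM: "real N \<le> M" using False unfolding M_def by simp
    have sp: "sqrt (real N) > 0" using N1 by simp
    have "real (k N) / sqrt (real N) \<le> real N / sqrt (real N)"
      using kN sp by (simp add: divide_right_mono)
    also have "\<dots> = sqrt (real N)" using sp by (metis real_div_sqrt of_nat_0_le_iff)
    also have "\<dots> \<le> sqrt M" using NM by simp
    also have "\<dots> \<le> sqrt M * (M powr \<delta> * real N powr (- \<delta>))"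
    proof -
      have "real N powr \<delta> \<le> M powr \<delta>" using NM assms(1) by (intro powr_mono2) auto
      moreover have "real N powr \<delta> > 0" using N1 by simp
      ultimately have "1 \<le> M powr \<delta> / real N powr \<delta>" by simp
      then have "1 \<le> M powr \<delta> * real N powr (- \<delta>)" by (simp add: powr_minus_divide)
      then show ?thesis using M1 by (simp add: mult_le_cancel_left1)
    qed
    also have "\<dots> \<le> c' * real N powr (- \<delta>)" unfolding c'_def using c by (simp add: algebra_simps)
    finally show ?thesis .
  qed
  then show ?thesis using c'pos by blast
qed

lemma cs_pow: "ip N u v ^ (2 * p) \<le> ip N u u ^ (2 * p) + ip N v v ^ (2 * p)"
proof -
  have cs: "(ip N u v)\<^sup>2 \<le> ip N u u * ip N v v"
    unfolding ip_def using Cauchy_Schwarz_ineq_sum[of u v "{1..N}"] by (simp add: power2_eq_square)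
  have "ip N u v ^ (2 * p) = ((ip N u v)\<^sup>2) ^ p" by (simp add: power_mult)
  also have "\<dots> \<le> (ip N u u * ip N v v) ^ p" using cs by (intro power_mono) auto
  also have "\<dots> = ip N u u ^ p * ip N v v ^ p" by (simp add: power_mult_distrib)
  also have "\<dots> \<le> 1 * (ip N u u ^ p)\<^sup>2 + (ip N v v ^ p)\<^sup>2 / 1" by (rule amgm) simp
  also have "\<dots> = ip N u u ^ (2 * p) + ip N v v ^ (2 * p)" by (simp add: power_mult[symmetric] mult.commute)
  finally show ?thesis .
qed

lemma real_bound:
  fixes kk i N :: nat and c' :: real
  assumes N: "N \<ge> 1" and i: "i \<le> kk" and Rc: "real kk / sqrt (real N) \<le> c'"
  shows "(4 / (real N)\<^sup>2) ^ q * (2 * real i ^ (2 * q) * real N ^ q + real i ^ (4 * q))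
       \<le> 4 ^ q * (2 + c' ^ (2 * q)) * (real kk / sqrt (real N)) ^ (2 * q)"
proof -
  define R where "R = real kk / sqrt (real N)"
  define \<rho> where "\<rho> = (real i)\<^sup>2 / real N"
  have Np: "real N > 0" using N by simp
  have R0: "R \<ge> 0" unfolding R_def by simp
  have R2: "R\<^sup>2 = (real kk)\<^sup>2 / real N" unfolding R_def using Np by (simp add: power_divide)
  have \<rho>0: "\<rho> \<ge> 0" unfolding \<rho>_def by simp
  have \<rho>R: "\<rho> \<le> R\<^sup>2" unfolding R2 \<rho>_def using i Np by (intro divide_right_mono power_mono) auto
  have i2: "real i ^ (2 * q) = \<rho> ^ q * real N ^ q"
  proof -
    have "(real i)\<^sup>2 = \<rho> * real N" unfolding \<rho>_def using Np by simp
    then show ?thesis by (simp add: power_mult power_mult_distrib)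
  qed
  have i4: "real i ^ (4 * q) = \<rho> ^ (2 * q) * (real N ^ q * real N ^ q)"
  proof -
    have "real i ^ (4 * q) = (real i ^ (2 * q)) ^ 2" by (simp add: power_mult[symmetric] mult.commute)
    moreover have "\<rho> ^ (2 * q) = \<rho> ^ q * \<rho> ^ q" by (simp add: mult_2 power_add)
    ultimately show ?thesis unfolding i2 by (simp add: power2_eq_square mult_ac)
  qed
  have Nq: "(4 / (real N)\<^sup>2) ^ q * (real N ^ q * real N ^ q) = 4 ^ q"
    using Np by (simp add: power_divide power_mult[symmetric] power_add[symmetric] mult_2[symmetric] mult.commute)
  have "(4 / (real N)\<^sup>2) ^ q * (2 * real i ^ (2 * q) * real N ^ q + real i ^ (4 * q))
      = (4 / (real N)\<^sup>2) ^ q * (real N ^ q * real N ^ q) * (2 * \<rho> ^ q + \<rho> ^ (2 * q))"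
    unfolding i2 i4 by (simp add: algebra_simps)
  also have "\<dots> = 4 ^ q * (2 * \<rho> ^ q + \<rho> ^ (2 * q))" unfolding Nq ..
  also have "\<dots> \<le> 4 ^ q * (2 * R ^ (2 * q) + c' ^ (2 * q) * R ^ (2 * q))"
  proof -
    have a: "\<rho> ^ q \<le> R ^ (2 * q)" using \<rho>R \<rho>0 by (simp add: power_mult power_mono)
    have "R \<le> c'" using Rc unfolding R_def .
    then have b: "R ^ (2 * q) \<le> c' ^ (2 * q)" using R0 by (intro power_mono) auto
    have "\<rho> ^ (2 * q) = \<rho> ^ q * \<rho> ^ q" by (simp add: mult_2 power_add)
    also have "\<dots> \<le> R ^ (2 * q) * R ^ (2 * q)" using a \<rho>0 by (intro mult_mono) auto
    also have "\<dots> \<le> c' ^ (2 * q) * R ^ (2 * q)" using b R0 by (intro mult_right_mono) auto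
    finally show ?thesis using a by (intro mult_left_mono add_mono) auto
  qed
  also have "\<dots> = 4 ^ q * (2 + c' ^ (2 * q)) * R ^ (2 * q)" by (simp add: algebra_simps)
  finally show ?thesis unfolding R_def .
qed

theorem lemma3p5:
  fixes \<delta> :: real and k :: "nat \<Rightarrow> nat" and p :: nat
  assumes "\<delta> > 0"
    and "(\<lambda>N. real (k N)) \<in> O(\<lambda>N. real N powr (1/2 - \<delta>))"
    and "\<forall>N. k N \<le> N"
    and "p \<ge> 1"
  shows "\<exists>C. \<forall>N. \<forall>l\<in>{1..k N}. \<forall>l'\<in>{1..k N}.
           (\<integral>\<^sup>+\<omega>. ennreal ((ip N (dd N (yv \<omega>) l) (dd N (yv \<omega>) l')) ^ (2 * p)) \<partial>gauss_space N)
             \<le> ennreal (C * (real (k N) / sqrt (real N)) ^ (4 * p))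
           \<and> (\<integral>\<^sup>+\<omega>. ennreal ((ip N (dd N (yv \<omega>) l) (dd N (yv \<omega>) l')) ^ (2 * p)) \<partial>gauss_space N)
             \<le> ennreal (C * real N powr (- 4 * real p * \<delta>))"
proof -
  obtain c' where c'pos: "c' > 0" and kb: "\<And>N. N \<ge> 1 \<Longrightarrow> real (k N) / sqrt (real N) \<le> c' * real N powr (- \<delta>)"
    using kbound[OF assms(1-3)] by blast
  define q where "q = 2 * p"
  have q1: "q \<ge> 1" using assms(4) unfolding q_def by simp
  define C0 where "C0 = 2 * (GC q * GC (2 * q)) * (4 ^ q * (2 + c' ^ (2 * q)))"
  define C where "C = C0 * (1 + c' ^ (4 * p))"
  have GC0: "GC q \<ge> 0" "GC (2 * q) \<ge> 0" using GC_pos[of q] GC_pos[of "2*q"] by auto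
  have C00: "C0 \<ge> 0" unfolding C0_def using GC0 c'pos by simp
  have main: "(\<integral>\<^sup>+\<omega>. ennreal ((ip N (dd N (yv \<omega>) l) (dd N (yv \<omega>) l')) ^ (2 * p)) \<partial>gauss_space N)
             \<le> ennreal (C * (real (k N) / sqrt (real N)) ^ (4 * p))
           \<and> (\<integral>\<^sup>+\<omega>. ennreal ((ip N (dd N (yv \<omega>) l) (dd N (yv \<omega>) l')) ^ (2 * p)) \<partial>gauss_space N)
             \<le> ennreal (C * real N powr (- 4 * real p * \<delta>))"
    if l: "l \<in> {1..k N}" and l': "l' \<in> {1..k N}" for N l l'
  proof -
    have kN: "k N \<le> N" using assms(3) by simp
    have N1: "N \<ge> 1" using l kN by simp
    define R where "R = real (k N) / sqrt (real N)"
    have R0: "R \<ge> 0" unfolding R_def by simp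
    have pd: "real N powr (- \<delta>) \<le> 1" using N1 assms(1) by (simp add: powr_minus_divide ge_one_powr_ge_zero)
    have Rc': "R \<le> c' * real N powr (- \<delta>)" unfolding R_def by (rule kb[OF N1])
    have Rc: "R \<le> c'" using Rc' pd c'pos by (meson mult_left_le order_trans less_imp_le powr_ge_zero)
    have single: "(\<integral>\<^sup>+\<omega>. ennreal (ip N (dd N (yv \<omega>) i) (dd N (yv \<omega>) i) ^ q) \<partial>gauss_space N)
        \<le> ennreal ((GC q * GC (2 * q)) * (4 ^ q * (2 + c' ^ (2 * q)) * R ^ (2 * q)))" if i: "i \<in> {1..k N}" for i
    proof -
      have "(\<integral>\<^sup>+\<omega>. ennreal (ip N (dd N (yv \<omega>) i) (dd N (yv \<omega>) i) ^ q) \<partial>gauss_space N)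
          \<le> ennreal ((4 / (real N)\<^sup>2) ^ q * (GC q * GC (2 * q)) * (2 * real i ^ (2 * q) * real N ^ q + real i ^ (4 * q)))"
        by (rule dd_moment) (use i kN q1 in auto)
      also have "\<dots> \<le> ennreal ((GC q * GC (2 * q)) * (4 ^ q * (2 + c' ^ (2 * q)) * R ^ (2 * q)))"
      proof (intro ennreal_leI)
        have "(4 / (real N)\<^sup>2) ^ q * (2 * real i ^ (2 * q) * real N ^ q + real i ^ (4 * q))
            \<le> 4 ^ q * (2 + c' ^ (2 * q)) * R ^ (2 * q)"
          unfolding R_def by (rule real_bound[OF N1]) (use i Rc R_def in auto)
        note H = this
        show "(4 / (real N)\<^sup>2) ^ q * (GC q * GC (2 * q)) * (2 * real i ^ (2 * q) * real N ^ q + real i ^ (4 * q))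
            \<le> (GC q * GC (2 * q)) * (4 ^ q * (2 + c' ^ (2 * q)) * R ^ (2 * q))"
        proof -
          have eq: "(4 / (real N)\<^sup>2) ^ q * (GC q * GC (2 * q)) * (2 * real i ^ (2 * q) * real N ^ q + real i ^ (4 * q))
              = (GC q * GC (2 * q)) * ((4 / (real N)\<^sup>2) ^ q * (2 * real i ^ (2 * q) * real N ^ q + real i ^ (4 * q)))"
            by (simp only: ac_simps)
          show ?thesis unfolding eq by (rule mult_left_mono[OF H]) (use GC0 in simp)
        qed
      qed
      finally show ?thesis .
    qed
    have bound: "(\<integral>\<^sup>+\<omega>. ennreal ((ip N (dd N (yv \<omega>) l) (dd N (yv \<omega>) l')) ^ (2 * p)) \<partial>gauss_space N)
        \<le> ennreal (C0 * R ^ (4 * p))"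
    proof -
      have "(\<integral>\<^sup>+\<omega>. ennreal ((ip N (dd N (yv \<omega>) l) (dd N (yv \<omega>) l')) ^ (2 * p)) \<partial>gauss_space N)
          \<le> (\<integral>\<^sup>+\<omega>. ennreal (ip N (dd N (yv \<omega>) l) (dd N (yv \<omega>) l) ^ q) + ennreal (ip N (dd N (yv \<omega>) l') (dd N (yv \<omega>) l') ^ q) \<partial>gauss_space N)"
      proof (intro nn_integral_mono)
        fix \<omega>
        have "ip N (dd N (yv \<omega>) l) (dd N (yv \<omega>) l') ^ (2 * p) \<le> ip N (dd N (yv \<omega>) l) (dd N (yv \<omega>) l) ^ q + ip N (dd N (yv \<omega>) l') (dd N (yv \<omega>) l') ^ q"
          unfolding q_def by (rule cs_pow)
        then show "ennreal (ip N (dd N (yv \<omega>) l) (dd N (yv \<omega>) l') ^ (2 * p)) \<le> ennreal (ip N (dd N (yv \<omega>) l) (dd N (yv \<omega>) l) ^ q) + ennreal (ip N (dd N (yv \<omega>) l') (dd N (yv \<omega>) l') ^ q)"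
          by (simp add: ennreal_plus[symmetric] ip_self_nonneg del: ennreal_plus)
      qed
      also have "\<dots> = (\<integral>\<^sup>+\<omega>. ennreal (ip N (dd N (yv \<omega>) l) (dd N (yv \<omega>) l) ^ q) \<partial>gauss_space N)
                    + (\<integral>\<^sup>+\<omega>. ennreal (ip N (dd N (yv \<omega>) l') (dd N (yv \<omega>) l') ^ q) \<partial>gauss_space N)"
        by (rule nn_integral_add) (unfold ip_def, measurable)
      also have "\<dots> \<le> ennreal ((GC q * GC (2 * q)) * (4 ^ q * (2 + c' ^ (2 * q)) * R ^ (2 * q)))
                     + ennreal ((GC q * GC (2 * q)) * (4 ^ q * (2 + c' ^ (2 * q)) * R ^ (2 * q)))"
        by (intro add_mono single l l')
      also have "\<dots> = ennreal (C0 * R ^ (4 * p))"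
      proof -
        define X where "X = (GC q * GC (2 * q)) * (4 ^ q * (2 + c' ^ (2 * q)) * R ^ (2 * q))"
        have X0: "0 \<le> X" unfolding X_def using GC0 c'pos R0 by simp
        have e1: "ennreal X + ennreal X = ennreal (2 * X)"
          by (subst ennreal_plus[OF X0 X0, symmetric]) (simp only: mult_2)
        have rr: "R ^ (2 * q) = R ^ (4 * p)" unfolding q_def by simp
        have e2: "2 * X = C0 * R ^ (4 * p)" unfolding X_def C0_def rr[symmetric] by (simp only: ac_simps)
        show ?thesis unfolding X_def[symmetric] e1 e2 ..
      qed
      finally show ?thesis .
    qed
    have first: "C0 * R ^ (4 * p) \<le> C * R ^ (4 * p)"
      unfolding C_def using C00 R0 c'pos by (intro mult_right_mono) (auto simp: mult_le_cancel_left1)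
    have second: "C0 * R ^ (4 * p) \<le> C * real N powr (- 4 * real p * \<delta>)"
    proof -
      have "R ^ (4 * p) \<le> (c' * real N powr (- \<delta>)) ^ (4 * p)" using R0 Rc' by (intro power_mono) auto
      also have "\<dots> = c' ^ (4 * p) * real N powr (- 4 * real p * \<delta>)"
        using N1 by (simp add: power_mult_distrib powr_realpow[symmetric] powr_powr mult_ac)
      finally have "C0 * R ^ (4 * p) \<le> C0 * (c' ^ (4 * p) * real N powr (- 4 * real p * \<delta>))"
        using C00 by (intro mult_left_mono)
      also have "\<dots> \<le> C * real N powr (- 4 * real p * \<delta>)"
      proof -
        have P0: "0 \<le> real N powr (- 4 * real p * \<delta>)" by simp
        have "C0 * c' ^ (4 * p) \<le> C0 * (1 + c' ^ (4 * p))" using C00 by (intro mult_left_mono) auto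
        then have "C0 * c' ^ (4 * p) * real N powr (- 4 * real p * \<delta>) \<le> C0 * (1 + c' ^ (4 * p)) * real N powr (- 4 * real p * \<delta>)"
          using P0 by (rule mult_right_mono)
        then show ?thesis unfolding C_def by (simp only: mult.assoc)
      qed
      finally show ?thesis .
    qed
    show ?thesis
      using bound first second ennreal_leI unfolding R_def by (meson order_trans)
  qed
  show ?thesis by (intro exI[of _ C] allI ballI main)
qed

end
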